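(* Assume: (a) for all $1\le\jmath\le\mathcal J$, $\sup_{1\le k\le k_{n,\jmath}}\sup_{P\in\mathbf P}\|q_{k,n,\jmath}\|_{L^\infty_P}\le B_n$ with $B_n\ge1$; (b) the class $\mathcal F_n\equiv\{\rho_\jmath(\cdot,\theta):\theta\in\Theta_n\cap R,\ 1\le\jmath\le\mathcal J\}$ has an envelope $F_n$ with $\sup_{P\in\mathbf P}E_P[F_n^2(V)]<\infty$; (c) $\sup_{P\in\mathbf P}J_{[\,]}(\|F_n\|_{L^2_P},\mathcal F_n,\|\cdot\|_{L^2_P})\le J_n$. Then for some $K_0>0$, $$\sup_{P\in\mathbf P}E_P\Big[\sup_{\theta\in\Theta_n\cap R}\|\mathbb W_{n,P}\rho(\cdot,\theta)*q_n^{k_n}\|_r\Big]\le K_0k_n^{1/r}\sqrt{\log(k_n)}B_nJ_n.$$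
   Context: $V=(X,Z)$ with $Z=(Z_1,\dots,Z_{\mathcal J})$, distributed according to $P\in\mathbf P$. $\Theta_n\cap R$ is a given parameter set, $\rho_\jmath(x,\theta)$ real functions, $\rho=(\rho_1,\dots,\rho_{\mathcal J})'$. $q^{k_{n,\jmath}}_{n,\jmath}(z_\jmath)=(q_{1,n,\jmath}(z_\jmath),\dots,q_{k_{n,\jmath},n,\jmath}(z_\jmath))'$, $k_n=\sum_\jmath k_{n,\jmath}$, and $\rho(\cdot,\theta)*q_n^{k_n}$ denotes the $k_n$-vector of functions $(\rho_\jmath(\cdot,\theta)q_{k,n,\jmath})_{\jmath,k}$. $\mathbb W_{n,P}$ is an isonormal process on $L^2_P$: a mean-zero Gaussian process indexed by $f\in L^2_P$ with $E[\mathbb W_{n,P}f\,\mathbb W_{n,P}g]=E_P[(f-E_Pf)(g-E_Pg)]$; applied to a vector of functions it acts coordinatewise. $\|\cdot\|_r$, $r\ge2$, is the $\ell^r$ norm. $N_{[\,]}$ denotes bracketing numbers under $\|\cdot\|_{L^2_P}$ and $J_{[\,]}(\delta,\mathcal F,\|\cdot\|_{L^2_P})\equiv\int_0^\delta\sqrt{1+\log N_{[\,]}(\epsilon,\mathcal F,\|\cdot\|_{L^2_P})}d\epsilon$. *)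

theory Defs
  imports "HOL-Probability.Probability"
begin

definition L2 :: "'v measure \<Rightarrow> ('v \<Rightarrow> real) set" where
  "L2 P = {f. f \<in> borel_measurable P \<and> integrable P (\<lambda>v. (f v)^2)}"

definition L2norm :: "'v measure \<Rightarrow> ('v \<Rightarrow> real) \<Rightarrow> real" where
  "L2norm P f = sqrt (\<integral>v. (f v)^2 \<partial>P)"

definition varP :: "'v measure \<Rightarrow> ('v \<Rightarrow> real) \<Rightarrow> real" where
  "varP P f = (\<integral>v. (f v - (\<integral>u. f u \<partial>P))^2 \<partial>P)"

definition centered_gaussian :: "'w measure \<Rightarrow> ('w \<Rightarrow> real) \<Rightarrow> real \<Rightarrow> bool" where
  "centered_gaussian Q X s2 \<longleftrightarrow>
     (s2 = 0 \<and> X \<in> borel_measurable Q \<and> (AE w in Q. X w = 0)) \<or>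
     (s2 > 0 \<and> distributed Q lborel X (normal_density 0 (sqrt s2)))"

text \<open>Isonormal process on L2_P, defined on the probability space Q: a centered Gaussian
  process indexed by L2_P (every finite linear combination is centered normal) with
  covariance E_P[(f - E_P f)(g - E_P g)], i.e. Var(sum a_f W f) = Var_P(sum a_f f).\<close>
definition isonormal :: "'v measure \<Rightarrow> 'w measure \<Rightarrow> (('v \<Rightarrow> real) \<Rightarrow> 'w \<Rightarrow> real) \<Rightarrow> bool" where
  "isonormal P Q W \<longleftrightarrow> prob_space Q \<and>
     (\<forall>F a. finite F \<and> F \<subseteq> L2 P \<longrightarrow>
        centered_gaussian Q (\<lambda>w. \<Sum>f\<in>F. a f * W f w) (varP P (\<lambda>v. \<Sum>f\<in>F. a f * f v)))"

definition eps_bracket :: "'v measure \<Rightarrow> real \<Rightarrow> ('v \<Rightarrow> real) \<times> ('v \<Rightarrow> real) \<Rightarrow> bool" where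
  "eps_bracket P eps b \<longleftrightarrow> fst b \<in> L2 P \<and> snd b \<in> L2 P \<and>
     L2norm P (\<lambda>v. snd b v - fst b v) < eps"

definition bracketing_number :: "'v measure \<Rightarrow> real \<Rightarrow> ('v \<Rightarrow> real) set \<Rightarrow> enat" where
  "bracketing_number P eps F = Inf {enat (card B) | B. finite B \<and> (\<forall>b\<in>B. eps_bracket P eps b) \<and>
      (\<forall>f\<in>F. \<exists>b\<in>B. \<forall>v\<in>space P. fst b v \<le> f v \<and> f v \<le> snd b v)}"

definition bracketing_integral :: "'v measure \<Rightarrow> real \<Rightarrow> ('v \<Rightarrow> real) set \<Rightarrow> ennreal" where
  "bracketing_integral P delta F =
     (\<integral>\<^sup>+ eps. indicator {0..delta} eps *
        (case bracketing_number P eps F of enat m \<Rightarrow> ennreal (sqrt (1 + ln (real m))) | \<infinity> \<Rightarrow> \<infinity>)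
      \<partial>lborel)"

end

theory Submission
  imports Defs
begin

lemma cg_meas: "centered_gaussian Q X v \<Longrightarrow> X \<in> borel_measurable Q"
  unfolding centered_gaussian_def
  by (auto dest!: distributed_measurable simp: measurable_lborel2)

lemma cg_nonneg: "centered_gaussian Q X v \<Longrightarrow> 0 \<le> v"
  unfolding centered_gaussian_def by auto

lemma normal_exp_shift:
  assumes s: "s > 0"
  shows "normal_density 0 s x * exp (l * x) = exp (l^2 * s^2 / 2) * normal_density (l * s^2) s x"
proof -
  have "-(x)\<^sup>2 / (2 * s\<^sup>2) + l * x = l^2 * s^2 / 2 + (-(x - l * s^2)\<^sup>2 / (2 * s\<^sup>2))"
    using s by (simp add: field_simps power2_eq_square)
  then have "exp (-(x)\<^sup>2 / (2 * s\<^sup>2)) * exp (l * x) = exp (l^2 * s^2 / 2) * exp (-(x - l * s^2)\<^sup>2 / (2 * s\<^sup>2))"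
    by (metis exp_add)
  then show ?thesis unfolding normal_density_def by simp
qed

lemma nn_integral_normal_density: "s > 0 \<Longrightarrow> (\<integral>\<^sup>+x. ennreal (normal_density m s x) \<partial>lborel) = 1"
  using integrable_normal_density[of m s] integral_normal_density[of m s] by (subst nn_integral_eq_integral) auto

lemma cg_mgf:
  assumes Q: "prob_space Q" and g: "centered_gaussian Q X v"
  shows "(\<integral>\<^sup>+ w. ennreal (exp (l * X w)) \<partial>Q) = ennreal (exp (l^2 * v / 2))"
proof (cases "v = 0")
  case True
  with g have ae: "AE w in Q. X w = 0" unfolding centered_gaussian_def by auto
  have "(\<integral>\<^sup>+ w. ennreal (exp (l * X w)) \<partial>Q) = (\<integral>\<^sup>+ w. 1 \<partial>Q)"
    by (rule nn_integral_cong_AE) (use ae in auto)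
  also have "\<dots> = 1" using prob_space.emeasure_space_1[OF Q] by simp
  finally show ?thesis using True by simp
next
  case False
  with g have v: "v > 0" and d: "distributed Q lborel X (normal_density 0 (sqrt v))"
    unfolding centered_gaussian_def by auto
  have "(\<integral>\<^sup>+ w. ennreal (exp (l * X w)) \<partial>Q) =
        (\<integral>\<^sup>+x. ennreal (normal_density 0 (sqrt v) x) * ennreal (exp (l * x)) \<partial>lborel)"
    by (rule distributed_nn_integral[OF d, symmetric]) simp
  also have "\<dots> = (\<integral>\<^sup>+x. ennreal (exp (l^2 * v / 2)) * ennreal (normal_density (l * v) (sqrt v) x) \<partial>lborel)"
    using normal_exp_shift[of "sqrt v" x l for x] v
    by (intro nn_integral_cong) (simp add: ennreal_mult[symmetric])
  also have "\<dots> = ennreal (exp (l^2 * v / 2))"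
    using v by (subst nn_integral_cmult) (simp_all add: nn_integral_normal_density)
  finally show ?thesis .
qed

lemma ln4_gt1: "1 < ln (4::real)"
proof -
  have "exp 1 < (4::real)" using e_less_272 by simp
  then show ?thesis by (metis exp_gt_zero exp_less_cancel_iff exp_ln zero_less_numeral)
qed

lemma e2: "exp (2 * x) = exp x * exp (x::real)" by (metis exp_add mult_2)

lemma gauss_max:
  assumes Q: "prob_space Q" and fin: "finite G" and ne: "G \<noteq> {}" and m: "real (card G) \<le> m"
    and gs: "\<forall>g\<in>G. \<exists>v. centered_gaussian Q g v \<and> v \<le> \<sigma>^2" and \<sigma>: "\<sigma> \<ge> 0"
  shows "(\<integral>\<^sup>+ w. ennreal (Max ((\<lambda>g. \<bar>g w\<bar>) ` G)) \<partial>Q) \<le> ennreal (\<sigma> * sqrt (2 * ln (2*m)))"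
proof (cases "\<sigma> = 0")
  case True
  have "\<forall>g\<in>G. AE w in Q. g w = 0"
  proof
    fix g assume "g \<in> G"
    then obtain v where "centered_gaussian Q g v" "v \<le> \<sigma>^2" using gs by auto
    moreover then have "v = 0" using cg_nonneg True by fastforce
    ultimately show "AE w in Q. g w = 0" unfolding centered_gaussian_def by auto
  qed
  then have "AE w in Q. \<forall>g\<in>G. g w = 0" by (intro AE_finite_allI[OF fin]) auto
  then have "AE w in Q. Max ((\<lambda>g. \<bar>g w\<bar>) ` G) = 0"
  proof (rule AE_mp, intro AE_I2 impI)
    fix w assume "\<forall>g\<in>G. g w = 0"
    then have "(\<lambda>g. \<bar>g w\<bar>) ` G = {0}" using ne by auto
    then show "Max ((\<lambda>g. \<bar>g w\<bar>) ` G) = 0" by simp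
  qed
  then have "(\<integral>\<^sup>+ w. ennreal (Max ((\<lambda>g. \<bar>g w\<bar>) ` G)) \<partial>Q) = (\<integral>\<^sup>+ w. 0 \<partial>Q)"
    by (intro nn_integral_cong_AE) auto
  then show ?thesis by simp
next
  case False
  with \<sigma> have \<sigma>p: "\<sigma> > 0" by simp
  have cardpos: "card G \<ge> 1" using fin ne by (simp add: Suc_le_eq card_gt_0_iff)
  then have m1: "m \<ge> 1" using m by linarith
  define c where "c = 2 * ln (2*m)"
  have l2: "ln 2 \<le> ln (2*m)" using m1 by simp
  have l4: "ln (4::real) = 2 * ln 2" using ln_realpow[of 2 2] by simp
  have "ln 4 \<le> c" unfolding c_def using l2 l4 by linarith
  then have c1: "c > 1" using ln4_gt1 by linarith
  define l where "l = sqrt c / \<sigma>"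
  have lpos: "l > 0" unfolding l_def using c1 \<sigma>p by simp
  have lsq: "l^2 * \<sigma>^2 / 2 = c / 2" unfolding l_def using c1 \<sigma>p
    by (simp add: power_divide)
  define Z where "Z = (\<lambda>w. Max ((\<lambda>g. \<bar>g w\<bar>) ` G))"
  have Zpos: "Z w \<ge> 0" for w
    unfolding Z_def using fin ne by (meson Max_ge_iff abs_ge_zero ex_in_conv finite_imageI image_eqI image_is_empty)
  have gm: "g \<in> borel_measurable Q" if "g \<in> G" for g using gs that cg_meas by blast
  have Zm: "Z \<in> borel_measurable Q" unfolding Z_def
    by (rule borel_measurable_Max[OF fin]) (use gm in auto)
  define S where "S = (\<lambda>w. \<Sum>g\<in>G. exp (l * g w) + exp ((-l) * g w))"
  have pw: "l * Z w \<le> exp (-c) * S w + (c - 1)" for w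
  proof -
    have "Z w \<in> (\<lambda>g. \<bar>g w\<bar>) ` G" unfolding Z_def using fin ne by (intro Max_in) auto
    then obtain g0 where g0: "g0 \<in> G" "Z w = \<bar>g0 w\<bar>" by auto
    have "exp (l * Z w) \<le> exp (l * g0 w) + exp ((-l) * g0 w)"
      using g0(2) by (cases "g0 w \<ge> 0") auto
    also have "\<dots> \<le> S w" unfolding S_def
      by (rule member_le_sum[OF g0(1)]) (auto simp: fin add_nonneg_nonneg)
    finally have e: "exp (l * Z w) \<le> S w" .
    have "l * Z w - c + 1 \<le> exp (l * Z w - c)" using exp_ge_add_one_self[of "l * Z w - c"] by linarith
    also have "\<dots> = exp (-c) * exp (l * Z w)" by (simp add: exp_diff exp_minus field_simps)
    also have "\<dots> \<le> exp (-c) * S w" using e by simp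
    finally show ?thesis by linarith
  qed
  have Spos: "S w \<ge> 0" for w unfolding S_def by (intro sum_nonneg) (auto intro: add_nonneg_nonneg)
  have "ennreal l * (\<integral>\<^sup>+ w. ennreal (Z w) \<partial>Q) = (\<integral>\<^sup>+ w. ennreal (l * Z w) \<partial>Q)"
    using lpos Zm by (subst nn_integral_cmult[symmetric]) (auto simp: ennreal_mult')
  also have "\<dots> \<le> (\<integral>\<^sup>+ w. ennreal (exp (-c)) * (\<Sum>g\<in>G. ennreal (exp (l * g w)) + ennreal (exp ((-l) * g w))) + ennreal (c - 1) \<partial>Q)"
  proof (rule nn_integral_mono)
    fix w
    have "ennreal (l * Z w) \<le> ennreal (exp (-c) * S w + (c - 1))" using pw[of w] by (rule ennreal_leI)
    also have "\<dots> = ennreal (exp (-c)) * (\<Sum>g\<in>G. ennreal (exp (l * g w)) + ennreal (exp ((-l) * g w))) + ennreal (c - 1)"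
      unfolding S_def using c1
      by (simp add: ennreal_plus ennreal_mult sum_nonneg add_nonneg_nonneg sum_ennreal[symmetric] del: sum_ennreal)
    finally show "ennreal (l * Z w) \<le> \<dots>" .
  qed
  also have "\<dots> = ennreal (exp (-c)) * (\<Sum>g\<in>G. (\<integral>\<^sup>+ w. ennreal (exp (l * g w)) \<partial>Q) + (\<integral>\<^sup>+ w. ennreal (exp ((-l) * g w)) \<partial>Q)) + ennreal (c - 1) * emeasure Q (space Q)"
    using gm by (simp add: nn_integral_add nn_integral_cmult nn_integral_sum)
  also have "\<dots> \<le> ennreal (exp (-c)) * (\<Sum>g\<in>G. ennreal (exp (c/2)) + ennreal (exp (c/2))) + ennreal (c - 1)"
  proof -
    have "(\<integral>\<^sup>+ w. ennreal (exp (a * g w)) \<partial>Q) \<le> ennreal (exp (c/2))" if gG: "g \<in> G" and aa: "a = l \<or> a = -l" for g a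
    proof -
      obtain v where v: "centered_gaussian Q g v" "v \<le> \<sigma>^2" using gs gG by auto
      have "a^2 = l^2" using aa by auto
      then have "a^2 * v / 2 \<le> c / 2" using lsq v(2) by (metis divide_right_mono mult_left_mono zero_le_numeral zero_le_power2)
      then show ?thesis using cg_mgf[OF Q v(1), of a] by simp
    qed
    note B = this
    have B2: "(\<integral>\<^sup>+ w. ennreal (exp ((-l) * g w)) \<partial>Q) \<le> ennreal (exp (c/2))" if "g \<in> G" for g
      using B[OF that, of "-l"] by simp
    have B1: "(\<integral>\<^sup>+ w. ennreal (exp (l * g w)) \<partial>Q) \<le> ennreal (exp (c/2))" if "g \<in> G" for g
      using B[OF that, of "l"] by simp
    show ?thesis using prob_space.emeasure_space_1[OF Q] B1 B2
      by (intro add_mono mult_left_mono sum_mono) auto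
  qed
  also have "\<dots> = ennreal (exp (-c) * (real (card G) * (2 * exp (c/2))) + (c - 1))"
    using c1 by (subst ennreal_plus) (auto simp: ennreal_mult ennreal_of_nat_eq_real_of_nat mult_2[symmetric])
  also have "\<dots> \<le> ennreal c"
  proof (rule ennreal_leI)
    have l: "exp (ln (2*m)) = 2*m" using m1 by simp
    have "c / 2 = ln (2*m)" unfolding c_def by simp
    then have "exp (c/2) = 2*m" using l by metis
    moreover have "exp (-c) = 1 / (2*m)^2"
    proof -
      have e: "exp (2 * ln (2*m)) = (2*m)*(2*m)" unfolding e2 l ..
      have "exp (-c) = inverse ((2*m)*(2*m))" unfolding c_def exp_minus e ..
      then show ?thesis by (metis power2_eq_square inverse_eq_divide)
    qed
    ultimately have "exp (-c) * (real (card G) * (2 * exp (c/2))) = real (card G) * (4 * m) / (4 * m * m)"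
      by (simp add: power2_eq_square)
    also have "\<dots> = real (card G) / m" using m1 by simp
    also have "\<dots> \<le> 1" using m m1 by simp
    finally show "exp (-c) * (real (card G) * (2 * exp (c/2))) + (c - 1) \<le> c" by linarith
  qed
  finally have A: "ennreal l * (\<integral>\<^sup>+ w. ennreal (Z w) \<partial>Q) \<le> ennreal c" .
  have "(\<integral>\<^sup>+ w. ennreal (Z w) \<partial>Q) = ennreal (1/l) * (ennreal l * (\<integral>\<^sup>+ w. ennreal (Z w) \<partial>Q))"
  proof -
    have "ennreal (1/l) * ennreal l = 1" using lpos by (simp add: ennreal_mult[symmetric])
    then show ?thesis by (simp add: mult.assoc[symmetric])
  qed
  also have "\<dots> \<le> ennreal (1/l) * ennreal c" using A by (rule mult_left_mono) simp
  also have "\<dots> = ennreal (c / l)" using lpos c1 by (simp add: ennreal_mult[symmetric])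
  also have "c / l = \<sigma> * sqrt (2 * ln (2*m))"
  proof -
    have sc: "sqrt c * sqrt c = c" using c1 by simp
    have "c / l = (sqrt c * sqrt c) * \<sigma> / sqrt c" unfolding l_def sc by simp
    also have "\<dots> = \<sigma> * sqrt c" using c1 by (simp add: field_simps)
    finally show ?thesis unfolding c_def .
  qed
  finally show ?thesis unfolding Z_def .
qed

lemma iso_gen:
  assumes iso: "isonormal P Q W" and F: "finite F" "F \<subseteq> L2 P"
  shows "centered_gaussian Q (\<lambda>w. \<Sum>f\<in>F. a f * W f w) (varP P (\<lambda>v. \<Sum>f\<in>F. a f * f v))"
proof -
  have "\<forall>F a. finite F \<and> F \<subseteq> L2 P \<longrightarrow>
        centered_gaussian Q (\<lambda>w. \<Sum>f\<in>F. a f * W f w) (varP P (\<lambda>v. \<Sum>f\<in>F. a f * f v))"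
    using iso unfolding isonormal_def by (rule conjunct2)
  then have "finite F \<and> F \<subseteq> L2 P \<longrightarrow>
        centered_gaussian Q (\<lambda>w. \<Sum>f\<in>F. a f * W f w) (varP P (\<lambda>v. \<Sum>f\<in>F. a f * f v))"
    by blast
  then show ?thesis using F by (rule mp[OF _ conjI])
qed

lemma iso_single:
  assumes iso: "isonormal P Q W" and f: "f \<in> L2 P"
  shows "centered_gaussian Q (W f) (varP P f)"
proof -
  have "centered_gaussian Q (\<lambda>w. \<Sum>h\<in>{f}. (\<lambda>_. 1) h * W h w) (varP P (\<lambda>v. \<Sum>h\<in>{f}. (\<lambda>_. 1) h * h v))"
    by (rule iso_gen[OF iso]) (use f in auto)
  then show ?thesis by simp
qed

lemma iso_diff:
  assumes iso: "isonormal P Q W" and f: "f \<in> L2 P" and g: "g \<in> L2 P"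
  shows "centered_gaussian Q (\<lambda>w. W f w - W g w) (varP P (\<lambda>v. f v - g v))"
proof (cases "f = g")
  case True
  have "centered_gaussian Q (\<lambda>w. \<Sum>h\<in>{f}. (\<lambda>_. 0) h * W h w) (varP P (\<lambda>v. \<Sum>h\<in>{f}. (\<lambda>_. 0) h * h v))"
    by (rule iso_gen[OF iso]) (use f in auto)
  then show ?thesis using True by simp
next
  case False
  have ne: "g \<noteq> f" using False by auto
  have "centered_gaussian Q (\<lambda>w. \<Sum>h\<in>{f,g}. (\<lambda>h. if h = f then 1 else -1) h * W h w)
           (varP P (\<lambda>v. \<Sum>h\<in>{f,g}. (\<lambda>h. if h = f then 1 else -1) h * h v))"
    by (rule iso_gen[OF iso]) (use f g in auto)
  moreover have "(\<lambda>w. \<Sum>h\<in>{f,g}. (\<lambda>h. if h = f then 1 else -1) h * W h w) = (\<lambda>w. W f w - W g w)"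
    using False ne by (simp add: sum.insert)
  moreover have "(\<lambda>v. \<Sum>h\<in>{f,g}. (\<lambda>h. if h = f then (1::real) else -1) h * h v) = (\<lambda>v. f v - g v)"
    using False ne by (simp add: sum.insert)
  ultimately show ?thesis by simp
qed

lemma sq_sum_le: "((x::real) + y)^2 \<le> 2 * x^2 + 2 * y^2"
proof -
  have "0 \<le> (x - y)^2" by simp
  then show ?thesis unfolding power2_sum power2_diff by linarith
qed

lemma sq_diff_le: "((x::real) - y)^2 \<le> 2 * x^2 + 2 * y^2"
  using sq_sum_le[of x "-y"] by simp

lemma sq_diff3_le: "((a::real) - c)^2 \<le> 2 * (a - b)^2 + 2 * (b - c)^2"
  using sq_sum_le[of "a - b" "b - c"] by simp

lemma L2_integrable_sq: "f \<in> L2 P \<Longrightarrow> integrable P (\<lambda>v. (f v)^2)"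
  unfolding L2_def by auto

lemma L2_meas: "f \<in> L2 P \<Longrightarrow> f \<in> borel_measurable P"
  unfolding L2_def by auto

lemma L2_diff:
  assumes f: "f \<in> L2 P" and g: "g \<in> L2 P"
  shows "(\<lambda>v. f v - g v) \<in> L2 P"
proof -
  have m: "(\<lambda>v. f v - g v) \<in> borel_measurable P" using f g unfolding L2_def by auto
  have i: "integrable P (\<lambda>v. 2 * (f v)^2 + 2 * (g v)^2)" using f g unfolding L2_def by auto
  have "integrable P (\<lambda>v. (f v - g v)^2)"
  proof (rule Bochner_Integration.integrable_bound[OF i])
    show "(\<lambda>v. (f v - g v)^2) \<in> borel_measurable P" using m by measurable
    show "AE x in P. norm ((f x - g x)^2) \<le> norm (2 * (f x)^2 + 2 * (g x)^2)"
      using sq_diff_le by (intro AE_I2) simp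
  qed
  then show ?thesis using m unfolding L2_def by auto
qed

lemma varP_le:
  assumes P: "prob_space P" and f: "f \<in> L2 P"
  shows "varP P f \<le> (\<integral>v. (f v)^2 \<partial>P)"
proof -
  have fm: "f \<in> borel_measurable P" and f2: "integrable P (\<lambda>v. (f v)^2)" using f unfolding L2_def by auto
  interpret prob_space P by (rule P)
  have fi: "integrable P f" using square_integrable_imp_integrable[OF fm f2] .
  define c where "c = (\<integral>u. f u \<partial>P)"
  have "(\<lambda>v. (f v - c)^2) = (\<lambda>v. (f v)^2 - 2 * c * f v + c^2)" by (simp add: power2_eq_square algebra_simps)
  then have "varP P f = (\<integral>v. (f v)^2 - 2 * c * f v + c^2 \<partial>P)" unfolding varP_def c_def by simp
  also have "\<dots> = (\<integral>v. (f v)^2 \<partial>P) - 2 * c * c + c^2"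
    using fi f2 by (simp add: c_def prob_space)
  also have "\<dots> \<le> (\<integral>v. (f v)^2 \<partial>P)" by (simp add: power2_eq_square)
  finally show ?thesis .
qed

lemma sq_int_diff_le:
  assumes a: "a \<in> L2 P" and b: "b \<in> L2 P" and c: "c \<in> L2 P"
  shows "(\<integral>v. (a v - c v)^2 \<partial>P) \<le> 2 * (\<integral>v. (a v - b v)^2 \<partial>P) + 2 * (\<integral>v. (b v - c v)^2 \<partial>P)"
proof -
  have i1: "integrable P (\<lambda>v. (a v - c v)^2)" using L2_diff[OF a c] unfolding L2_def by auto
  have i2: "integrable P (\<lambda>v. (a v - b v)^2)" using L2_diff[OF a b] unfolding L2_def by auto
  have i3: "integrable P (\<lambda>v. (b v - c v)^2)" using L2_diff[OF b c] unfolding L2_def by auto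
  have "(\<integral>v. (a v - c v)^2 \<partial>P) \<le> (\<integral>v. 2 * (a v - b v)^2 + 2 * (b v - c v)^2 \<partial>P)"
  proof (rule integral_mono[OF i1])
    show "integrable P (\<lambda>v. 2 * (a v - b v)^2 + 2 * (b v - c v)^2)" using i2 i3 by auto
    fix v
    show "(a v - c v)^2 \<le> 2 * (a v - b v)^2 + 2 * (b v - c v)^2"
      by (rule sq_diff3_le)
  qed
  also have "\<dots> = 2 * (\<integral>v. (a v - b v)^2 \<partial>P) + 2 * (\<integral>v. (b v - c v)^2 \<partial>P)"
    using i2 i3 by simp
  finally show ?thesis .
qed

lemma Max_img_img: "Max ((\<lambda>g. h g) ` (F ` I)) = Max ((\<lambda>s. h (F s)) ` I)"
  by (simp add: image_image)

lemma gauss_max_img: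
  assumes Q: "prob_space Q" and fin: "finite I" and ne: "I \<noteq> {}" and m: "real (card (Y ` I)) \<le> m"
    and gs: "\<And>s. s \<in> I \<Longrightarrow> \<exists>v. centered_gaussian Q (Y s) v \<and> v \<le> \<sigma>^2" and \<sigma>: "\<sigma> \<ge> 0"
  shows "(\<integral>\<^sup>+ w. ennreal (Max ((\<lambda>s. \<bar>Y s w\<bar>) ` I)) \<partial>Q) \<le> ennreal (\<sigma> * sqrt (2 * ln (2*m)))"
proof -
  have "(\<integral>\<^sup>+ w. ennreal (Max ((\<lambda>g. \<bar>g w\<bar>) ` (Y ` I))) \<partial>Q) \<le> ennreal (\<sigma> * sqrt (2 * ln (2*m)))"
    by (rule gauss_max[OF Q _ _ m _ \<sigma>]) (use fin ne gs in auto)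
  then show ?thesis by (simp add: image_image)
qed

lemma abs3: "(x::real) = a + b + c \<Longrightarrow> \<bar>x\<bar> \<le> \<bar>a\<bar> + \<bar>b\<bar> + \<bar>c\<bar>"
  using abs_triangle_ineq[of "a+b" c] abs_triangle_ineq[of a b] by simp

lemma ennreal_add3: "0 \<le> a \<Longrightarrow> 0 \<le> b \<Longrightarrow> 0 \<le> c \<Longrightarrow> ennreal a + ennreal b + ennreal c = ennreal (a+b+c)"
  by (simp add: ennreal_plus)

lemma chaining:
  fixes X :: "'i \<Rightarrow> 'w \<Rightarrow> real" and \<pi> :: "nat \<Rightarrow> 'i \<Rightarrow> 'i"
  assumes Q: "prob_space Q" and I: "finite I" "I \<noteq> {}"
    and \<pi>I: "\<And>k s. s \<in> I \<Longrightarrow> \<pi> k s \<in> I"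
    and g0: "\<And>t. t \<in> I \<Longrightarrow> \<exists>v. centered_gaussian Q (X t) v \<and> v \<le> \<sigma>0^2"
    and gk: "\<And>k s. k < K \<Longrightarrow> s \<in> I \<Longrightarrow> \<exists>v. centered_gaussian Q (\<lambda>w. X (\<pi> (Suc k) s) w - X (\<pi> k s) w) v \<and> v \<le> (\<sigma> k)^2"
    and gL: "\<And>s. s \<in> I \<Longrightarrow> \<exists>v. centered_gaussian Q (\<lambda>w. X s w - X (\<pi> K s) w) v \<and> v \<le> \<sigma>L^2"
    and mk: "\<And>k. k \<le> K \<Longrightarrow> real (card (\<pi> k ` I)) \<le> m k"
    and mk1: "\<And>k. k \<le> K \<Longrightarrow> 1 \<le> m k"
    and \<sigma>0: "\<sigma>0 \<ge> 0" and \<sigma>k: "\<And>k. \<sigma> k \<ge> 0" and \<sigma>L: "\<sigma>L \<ge> 0"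
  shows "(\<integral>\<^sup>+ w. ennreal (Max ((\<lambda>s. \<bar>X s w\<bar>) ` I)) \<partial>Q) \<le>
     ennreal (\<sigma>0 * sqrt (2*ln(2*m 0)) + (\<Sum>k<K. \<sigma> k * sqrt (2*ln(2*(m (Suc k) * m k)))) + \<sigma>L * sqrt (2*ln(2*real (card I))))"
proof -
  define D where "D = (\<lambda>k s w. X (\<pi> (Suc k) s) w - X (\<pi> k s) w)"
  define A0 where "A0 = (\<lambda>w. Max ((\<lambda>s. \<bar>X (\<pi> 0 s) w\<bar>) ` I))"
  define Ak where "Ak = (\<lambda>k w. Max ((\<lambda>s. \<bar>D k s w\<bar>) ` I))"
  define AL where "AL = (\<lambda>w. Max ((\<lambda>s. \<bar>X s w - X (\<pi> K s) w\<bar>) ` I))"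
  have Xm: "X t \<in> borel_measurable Q" if "t \<in> I" for t using g0[OF that] cg_meas by blast
  have A0m: "A0 \<in> borel_measurable Q" unfolding A0_def
    by (rule borel_measurable_Max[OF I(1)]) (use Xm \<pi>I in auto)
  have Akm: "Ak k \<in> borel_measurable Q" for k unfolding Ak_def D_def
    by (rule borel_measurable_Max[OF I(1)]) (use Xm \<pi>I in auto)
  have ALm: "AL \<in> borel_measurable Q" unfolding AL_def
    by (rule borel_measurable_Max[OF I(1)]) (use Xm \<pi>I in auto)
  have Mge: "\<bar>f s\<bar> \<le> Max ((\<lambda>s. \<bar>f s\<bar>) ` I)" if "s \<in> I" for f s
    using I that by (intro Max_ge) auto
  have A0p: "A0 w \<ge> 0" for w using Mge[of _ "\<lambda>s. X (\<pi> 0 s) w"] I(2) unfolding A0_def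
    by (meson abs_ge_zero all_not_in_conv order_trans)
  have Akp: "Ak k w \<ge> 0" for k w using Mge[of _ "\<lambda>s. D k s w"] I(2) unfolding Ak_def
    by (meson abs_ge_zero all_not_in_conv order_trans)
  have ALp: "AL w \<ge> 0" for w using Mge[of _ "\<lambda>s. X s w - X (\<pi> K s) w"] I(2) unfolding AL_def
    by (meson abs_ge_zero all_not_in_conv order_trans)
  have pw: "Max ((\<lambda>s. \<bar>X s w\<bar>) ` I) \<le> A0 w + (\<Sum>k<K. Ak k w) + AL w" for w
  proof (subst Max_le_iff)
    show "finite ((\<lambda>s. \<bar>X s w\<bar>) ` I)" using I by auto
    show "(\<lambda>s. \<bar>X s w\<bar>) ` I \<noteq> {}" using I by auto
    show "\<forall>a\<in>(\<lambda>s. \<bar>X s w\<bar>) ` I. a \<le> A0 w + (\<Sum>k<K. Ak k w) + AL w"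
    proof
      fix a assume "a \<in> (\<lambda>s. \<bar>X s w\<bar>) ` I"
      then obtain s where s: "s \<in> I" "a = \<bar>X s w\<bar>" by auto
      have tel: "(\<Sum>k<K. D k s w) = X (\<pi> K s) w - X (\<pi> 0 s) w"
        unfolding D_def by (rule sum_lessThan_telescope)
      have "X s w = X (\<pi> 0 s) w + (\<Sum>k<K. D k s w) + (X s w - X (\<pi> K s) w)"
        using tel by simp
      then have "\<bar>X s w\<bar> \<le> \<bar>X (\<pi> 0 s) w\<bar> + \<bar>\<Sum>k<K. D k s w\<bar> + \<bar>X s w - X (\<pi> K s) w\<bar>"
        by (rule abs3)
      also have "\<dots> \<le> \<bar>X (\<pi> 0 s) w\<bar> + (\<Sum>k<K. \<bar>D k s w\<bar>) + \<bar>X s w - X (\<pi> K s) w\<bar>"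
        by (simp add: sum_abs)
      also have "\<dots> \<le> A0 w + (\<Sum>k<K. Ak k w) + AL w"
        unfolding A0_def Ak_def AL_def
        by (intro add_mono sum_mono Mge s(1))
      finally show "a \<le> A0 w + (\<Sum>k<K. Ak k w) + AL w" using s by simp
    qed
  qed
  have "(\<integral>\<^sup>+ w. ennreal (Max ((\<lambda>s. \<bar>X s w\<bar>) ` I)) \<partial>Q) \<le>
        (\<integral>\<^sup>+ w. ennreal (A0 w) + (\<Sum>k<K. ennreal (Ak k w)) + ennreal (AL w) \<partial>Q)"
  proof (rule nn_integral_mono)
    fix w
    have "ennreal (Max ((\<lambda>s. \<bar>X s w\<bar>) ` I)) \<le> ennreal (A0 w + (\<Sum>k<K. Ak k w) + AL w)"
      by (rule ennreal_leI[OF pw])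
    also have "\<dots> = ennreal (A0 w) + (\<Sum>k<K. ennreal (Ak k w)) + ennreal (AL w)"
      using A0p Akp ALp by (simp add: ennreal_plus sum_nonneg sum_ennreal)
    finally show "ennreal (Max ((\<lambda>s. \<bar>X s w\<bar>) ` I)) \<le> \<dots>" .
  qed
  also have "\<dots> = (\<integral>\<^sup>+ w. ennreal (A0 w) \<partial>Q) + (\<Sum>k<K. \<integral>\<^sup>+ w. ennreal (Ak k w) \<partial>Q) + (\<integral>\<^sup>+ w. ennreal (AL w) \<partial>Q)"
    using A0m Akm ALm by (simp add: nn_integral_add nn_integral_sum)
  also have "\<dots> \<le> ennreal (\<sigma>0 * sqrt (2*ln(2*m 0))) + (\<Sum>k<K. ennreal (\<sigma> k * sqrt (2*ln(2*(m (Suc k) * m k))))) + ennreal (\<sigma>L * sqrt (2*ln(2*real (card I))))"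
  proof (intro add_mono sum_mono)
    have c0: "card ((\<lambda>s. X (\<pi> 0 s)) ` I) \<le> card (\<pi> 0 ` I)"
      using card_image_le[of "\<pi> 0 ` I" X] I by (simp add: image_image)
    show "(\<integral>\<^sup>+ w. ennreal (A0 w) \<partial>Q) \<le> ennreal (\<sigma>0 * sqrt (2*ln(2*m 0)))"
      unfolding A0_def
      by (rule gauss_max_img[OF Q I, of "\<lambda>s. X (\<pi> 0 s)"]) (use c0 mk[of 0] g0 \<pi>I \<sigma>0 in auto)
    show "(\<integral>\<^sup>+ w. ennreal (AL w) \<partial>Q) \<le> ennreal (\<sigma>L * sqrt (2*ln(2*real (card I))))"
      unfolding AL_def
      by (rule gauss_max_img[OF Q I, of "\<lambda>s w. X s w - X (\<pi> K s) w"]) (use card_image_le[OF I(1)] gL \<sigma>L in auto)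
    fix k assume k: "k \<in> {..<K}"
    have mpos: "m j \<ge> 0" if "j \<le> K" for j using mk[OF that] by (meson of_nat_0_le_iff order_trans)
    have "(\<lambda>s. D k s) ` I = (\<lambda>(a,b) w. X a w - X b w) ` ((\<lambda>s. (\<pi> (Suc k) s, \<pi> k s)) ` I)"
      unfolding D_def by (auto simp: image_image)
    then have "card ((\<lambda>s. D k s) ` I) \<le> card ((\<lambda>s. (\<pi> (Suc k) s, \<pi> k s)) ` I)"
      using I by (simp add: card_image_le)
    also have "\<dots> \<le> card (\<pi> (Suc k) ` I \<times> \<pi> k ` I)"
      using I by (intro card_mono) auto
    also have "\<dots> = card (\<pi> (Suc k) ` I) * card (\<pi> k ` I)" by (rule card_cartesian_product)
    finally have "real (card ((\<lambda>s. D k s) ` I)) \<le> real (card (\<pi> (Suc k) ` I)) * real (card (\<pi> k ` I))"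
      by (metis of_nat_le_iff of_nat_mult)
    also have "\<dots> \<le> m (Suc k) * m k"
      using k mk[of "Suc k"] mk[of k] by (intro mult_mono) auto
    finally have ck: "real (card ((\<lambda>s. D k s) ` I)) \<le> m (Suc k) * m k" .
    show "(\<integral>\<^sup>+ w. ennreal (Ak k w) \<partial>Q) \<le> ennreal (\<sigma> k * sqrt (2*ln(2*(m (Suc k) * m k))))"
      unfolding Ak_def
      by (rule gauss_max_img[OF Q I, of "D k"]) (use ck gk k \<sigma>k in \<open>auto simp: D_def\<close>)
  qed
  also have "\<dots> = ennreal (\<sigma>0 * sqrt (2*ln(2*m 0)) + (\<Sum>k<K. \<sigma> k * sqrt (2*ln(2*(m (Suc k) * m k)))) + \<sigma>L * sqrt (2*ln(2*real (card I))))"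
  proof -
    have n0: "0 \<le> \<sigma>0 * sqrt (2*ln(2*m 0))" using \<sigma>0 mk1[of 0] by simp
    have nk: "0 \<le> \<sigma> k * sqrt (2*ln(2*(m (Suc k) * m k)))" if "k \<in> {..<K}" for k
    proof -
      have a: "1 \<le> m (Suc k)" "1 \<le> m k" using that mk1[of k] mk1[of "Suc k"] by auto
      have "1 * 1 \<le> m (Suc k) * m k" using a by (intro mult_mono) auto
      then have "1 \<le> m (Suc k) * m k" by simp
      then show ?thesis using \<sigma>k[of k] by simp
    qed
    have cI: "1 \<le> card I" using I by (simp add: Suc_le_eq card_gt_0_iff)
    have nL: "0 \<le> \<sigma>L * sqrt (2*ln(2*real (card I)))" using \<sigma>L cI by simp
    have s: "(\<Sum>k<K. ennreal (\<sigma> k * sqrt (2*ln(2*(m (Suc k) * m k))))) = ennreal (\<Sum>k<K. \<sigma> k * sqrt (2*ln(2*(m (Suc k) * m k))))"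
      by (rule sum_ennreal) (use nk in auto)
    have sn: "0 \<le> (\<Sum>k<K. \<sigma> k * sqrt (2*ln(2*(m (Suc k) * m k))))" by (rule sum_nonneg) (use nk in auto)
    show ?thesis unfolding s by (rule ennreal_add3[OF n0 sn nL])
  qed
  finally show ?thesis .
qed

definition phi :: "enat \<Rightarrow> ennreal" where
  "phi x = (case x of enat m \<Rightarrow> ennreal (sqrt (1 + ln (real m))) | \<infinity> \<Rightarrow> \<infinity>)"

lemma phi_mono: "x \<le> y \<Longrightarrow> phi x \<le> phi y"
proof (cases y)
  case (enat n)
  assume xy: "x \<le> y"
  then obtain m where x: "x = enat m" and mn: "m \<le> n" using enat by (cases x) auto
  have "ln (real m) \<le> ln (real n)"
  proof (cases "m = 0")
    case True then show ?thesis by (cases "n = 0") auto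
  next
    case False then show ?thesis using mn by simp
  qed
  then show ?thesis unfolding phi_def x enat by (simp add: ennreal_leI)
next
  case infinity then show ?thesis unfolding phi_def by simp
qed

lemma phi_ge1: "phi x \<ge> 1"
proof (cases x)
  case (enat m)
  have "0 \<le> ln (real m)" by (cases "m = 0") auto
  then show ?thesis unfolding phi_def enat by simp
qed (simp add: phi_def)

lemma bracket_int_core:
  fixes N :: "real \<Rightarrow> enat"
  assumes anti: "\<And>a b. 0 < a \<Longrightarrow> a \<le> b \<Longrightarrow> N b \<le> N a" and \<delta>: "\<delta> > 0"
    and Jb: "(\<integral>\<^sup>+ e. indicator {0..\<delta>} e * phi (N e) \<partial>lborel) \<le> ennreal J"
  shows "(\<Sum>k\<le>K. phi (N (\<delta>/2^k)) * ennreal (\<delta>/2^(Suc k))) \<le> ennreal J"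
proof -
  define Ik where "Ik = (\<lambda>k::nat. {\<delta>/2^(Suc k)<..\<delta>/2^k})"
  have pw: "(\<Sum>k\<le>K. phi (N (\<delta>/2^k)) * indicator (Ik k) e) \<le> indicator {0..\<delta>} e * phi (N e)" for e
  proof (cases "\<exists>k\<le>K. e \<in> Ik k")
    case True
    then obtain k0 where k0: "k0 \<le> K" "e \<in> Ik k0" by auto
    have others: "e \<notin> Ik k" if "k \<noteq> k0" for k
    proof
      assume ek: "e \<in> Ik k"
      have mono: "\<delta>/2^j \<le> \<delta>/2^(Suc i)" if "i < j" for i j :: nat
      proof -
        have "(2::real)^(Suc i) \<le> 2^j" using that by (intro power_increasing) auto
        then show ?thesis using \<delta> by (intro divide_left_mono) auto
      qed
      show False
      proof (cases "k < k0")
        case True then show ?thesis using mono[OF True] ek k0(2) unfolding Ik_def by auto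
      next
        case False then have "k0 < k" using that by auto
        then show ?thesis using mono[of k0 k] ek k0(2) unfolding Ik_def by auto
      qed
    qed
    have "(\<Sum>k\<le>K. phi (N (\<delta>/2^k)) * indicator (Ik k) e) = phi (N (\<delta>/2^k0)) * indicator (Ik k0) e"
      by (rule sum.mono_neutral_right[where S="{k0}", simplified]) (use k0 others in auto)
    also have "\<dots> = phi (N (\<delta>/2^k0))" using k0 by simp
    also have "\<dots> \<le> phi (N e)"
    proof (rule phi_mono, rule anti)
      show "0 < e" using k0(2) \<delta> unfolding Ik_def by (auto intro: less_trans[rotated])
      show "e \<le> \<delta>/2^k0" using k0(2) unfolding Ik_def by auto
    qed
    also have "\<dots> = indicator {0..\<delta>} e * phi (N e)"
    proof -
      have "e \<le> \<delta>/2^k0" using k0(2) unfolding Ik_def by auto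
      also have "\<dots> \<le> \<delta>" using \<delta> by (simp add: divide_le_eq one_le_power)
      finally have "e \<in> {0..\<delta>}" using k0(2) \<delta> unfolding Ik_def
        by auto
      then show ?thesis by simp
    qed
    finally show ?thesis .
  next
    case False
    then have "(\<Sum>k\<le>K. phi (N (\<delta>/2^k)) * indicator (Ik k) e) = 0" by (intro sum.neutral) auto
    then show ?thesis by simp
  qed
  have "(\<Sum>k\<le>K. phi (N (\<delta>/2^k)) * ennreal (\<delta>/2^(Suc k))) = (\<Sum>k\<le>K. phi (N (\<delta>/2^k)) * emeasure lborel (Ik k))"
  proof (intro sum.cong refl)
    fix k assume "k \<in> {..K}"
    have "\<delta>/2^(Suc k) \<le> \<delta>/2^k" using \<delta> by (simp add: divide_le_eq)
    then have "emeasure lborel (Ik k) = ennreal (\<delta>/2^k - \<delta>/2^(Suc k))" unfolding Ik_def by simp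
    also have "\<delta>/2^k - \<delta>/2^(Suc k) = \<delta>/2^(Suc k)" by (simp add: field_simps)
    finally show "phi (N (\<delta>/2^k)) * ennreal (\<delta>/2^(Suc k)) = phi (N (\<delta>/2^k)) * emeasure lborel (Ik k)" by simp
  qed
  also have "\<dots> = (\<integral>\<^sup>+ e. (\<Sum>k\<le>K. phi (N (\<delta>/2^k)) * indicator (Ik k) e) \<partial>lborel)"
    by (subst nn_integral_sum) (auto simp: Ik_def nn_integral_cmult_indicator)
  also have "\<dots> \<le> (\<integral>\<^sup>+ e. indicator {0..\<delta>} e * phi (N e) \<partial>lborel)"
    by (rule nn_integral_mono) (rule pw)
  also have "\<dots> \<le> ennreal J" by (rule Jb)
  finally show ?thesis .
qed

lemma bracket_int_lower:
  fixes N :: "real \<Rightarrow> enat"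
  assumes anti: "\<And>a b. 0 < a \<Longrightarrow> a \<le> b \<Longrightarrow> N b \<le> N a" and \<delta>: "\<delta> > 0"
    and Jb: "(\<integral>\<^sup>+ e. indicator {0..\<delta>} e * phi (N e) \<partial>lborel) \<le> ennreal J"
  shows "N (\<delta>/2^k) \<noteq> \<infinity>"
    and "(\<Sum>k\<le>K. (\<delta>/2^k) * sqrt (1 + ln (real (the_enat (N (\<delta>/2^k)))))) \<le> 2 * J"
proof -
  show fin: "N (\<delta>/2^k) \<noteq> \<infinity>" for k
  proof
    assume inf: "N (\<delta>/2^k) = \<infinity>"
    have "phi (N (\<delta>/2^k)) * ennreal (\<delta>/2^(Suc k)) \<le> (\<Sum>j\<le>k. phi (N (\<delta>/2^j)) * ennreal (\<delta>/2^(Suc j)))"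
      by (rule member_le_sum) auto
    also have "\<dots> \<le> ennreal J" by (rule bracket_int_core[OF anti \<delta> Jb])
    finally have "phi (N (\<delta>/2^k)) * ennreal (\<delta>/2^(Suc k)) \<le> ennreal J" .
    moreover have "phi (N (\<delta>/2^k)) * ennreal (\<delta>/2^(Suc k)) = \<infinity>"
      using inf \<delta> by (simp add: phi_def ennreal_top_mult)
    ultimately show False using ennreal_less_top[of J] by (simp add: top_unique)
  qed
  define a where "a = (\<lambda>k::nat. sqrt (1 + ln (real (the_enat (N (\<delta>/2^k))))))"
  have a1: "a k \<ge> 1" for k
  proof -
    have "0 \<le> ln (real (the_enat (N (\<delta>/2^k))))" by (cases "the_enat (N (\<delta>/2^k)) = 0") auto
    then show ?thesis unfolding a_def by simp
  qed
  have an: "0 \<le> a k * (\<delta>/2^(Suc k))" for k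
  proof -
    have "0 \<le> a k" using a1[of k] by linarith
    then show ?thesis using \<delta> by simp
  qed
  have ph: "phi (N (\<delta>/2^k)) = ennreal (a k)" for k
    using fin[of k] unfolding phi_def a_def by (cases "N (\<delta>/2^k)") auto
  have "ennreal (\<Sum>k\<le>K. a k * (\<delta>/2^(Suc k))) = (\<Sum>k\<le>K. phi (N (\<delta>/2^k)) * ennreal (\<delta>/2^(Suc k)))"
  proof -
    have "ennreal (\<Sum>k\<le>K. a k * (\<delta>/2^(Suc k))) = (\<Sum>k\<le>K. ennreal (a k * (\<delta>/2^(Suc k))))"
      by (rule sum_ennreal[symmetric]) (use an in auto)
    also have "\<dots> = (\<Sum>k\<le>K. phi (N (\<delta>/2^k)) * ennreal (\<delta>/2^(Suc k)))"
    proof (intro sum.cong refl)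
      fix k
      have "0 \<le> a k" using a1[of k] by linarith
      then show "ennreal (a k * (\<delta>/2^(Suc k))) = phi (N (\<delta>/2^k)) * ennreal (\<delta>/2^(Suc k))"
        unfolding ph by (rule ennreal_mult')
    qed
    finally show ?thesis .
  qed
  also have "\<dots> \<le> ennreal J" by (rule bracket_int_core[OF anti \<delta> Jb])
  finally have E: "ennreal (\<Sum>k\<le>K. a k * (\<delta>/2^(Suc k))) \<le> ennreal J" .
  have Spos: "0 < (\<Sum>k\<le>K. a k * (\<delta>/2^(Suc k)))"
  proof -
    have "0 < a 0 * (\<delta>/2^(Suc 0))" using a1[of 0] \<delta> by simp
    also have "\<dots> \<le> (\<Sum>k\<le>K. a k * (\<delta>/2^(Suc k)))"
      by (rule member_le_sum[of 0 "{..K}" "\<lambda>k. a k * (\<delta>/2^(Suc k))"]) (use an in auto)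
    finally show ?thesis .
  qed
  have J0: "J > 0"
  proof (rule ccontr)
    assume "\<not> J > 0"
    then have "ennreal J = 0" by (simp add: ennreal_eq_0_iff)
    then show False using E Spos by simp
  qed
  have S: "(\<Sum>k\<le>K. a k * (\<delta>/2^(Suc k))) \<le> J" using E J0 by (simp add: ennreal_le_iff)
  have "(\<Sum>k\<le>K. (\<delta>/2^k) * a k) = 2 * (\<Sum>k\<le>K. a k * (\<delta>/2^(Suc k)))"
    by (simp add: sum_distrib_left field_simps)
  then show "(\<Sum>k\<le>K. (\<delta>/2^k) * sqrt (1 + ln (real (the_enat (N (\<delta>/2^k)))))) \<le> 2 * J"
    using S unfolding a_def by simp
qed

lemma bracket_set:
  assumes "bracketing_number P \<epsilon> C = enat m"
  shows "\<exists>BS. finite BS \<and> card BS = m \<and> (\<forall>b\<in>BS. eps_bracket P \<epsilon> b) \<and>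
           (\<forall>f\<in>C. \<exists>b\<in>BS. \<forall>v\<in>space P. fst b v \<le> f v \<and> f v \<le> snd b v)"
proof -
  define S where "S = {enat (card B) | B. finite B \<and> (\<forall>b\<in>B. eps_bracket P \<epsilon> b) \<and>
      (\<forall>f\<in>C. \<exists>b\<in>B. \<forall>v\<in>space P. fst b v \<le> f v \<and> f v \<le> snd b v)}"
  have eq: "Inf S = enat m" using assms unfolding bracketing_number_def S_def .
  have ne: "S \<noteq> {}"
  proof
    assume "S = {}"
    then have "Inf S = \<infinity>" by (simp add: top_enat_def)
    then show False using eq by simp
  qed
  have "Inf S \<in> S" using ne unfolding Inf_enat_def by (auto intro: LeastI_ex)
  then have "enat m \<in> S" using eq by simp
  then obtain BS where "enat (card BS) = enat m" "finite BS" "\<forall>b\<in>BS. eps_bracket P \<epsilon> b"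
      "\<forall>f\<in>C. \<exists>b\<in>BS. \<forall>v\<in>space P. fst b v \<le> f v \<and> f v \<le> snd b v"
    unfolding S_def by auto
  then show ?thesis by auto
qed

lemma bracketing_number_anti:
  assumes "a \<le> b"
  shows "bracketing_number P b C \<le> bracketing_number P a C"
  unfolding bracketing_number_def
proof (rule Inf_superset_mono)
  show "{enat (card B) |B. finite B \<and> (\<forall>b\<in>B. eps_bracket P a b) \<and> (\<forall>f\<in>C. \<exists>b\<in>B. \<forall>v\<in>space P. fst b v \<le> f v \<and> f v \<le> snd b v)}
    \<subseteq> {enat (card B) |B. finite B \<and> (\<forall>bb\<in>B. eps_bracket P b bb) \<and> (\<forall>f\<in>C. \<exists>b\<in>B. \<forall>v\<in>space P. fst b v \<le> f v \<and> f v \<le> snd b v)}"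
    using assms unfolding eps_bracket_def by fastforce
qed

lemma sqrt_lt_sq: "0 \<le> x \<Longrightarrow> sqrt x < e \<Longrightarrow> x < e^2"
  by (metis real_sqrt_lt_0_iff real_sqrt_less_iff real_sqrt_pow2 not_less order_le_less_trans power_strict_mono real_sqrt_ge_zero zero_less_numeral)

lemma bracket_pair_bound:
  fixes g h q :: "'v \<Rightarrow> real"
  assumes P: "prob_space P" and b: "eps_bracket P \<epsilon> b"
    and g: "\<forall>v\<in>space P. fst b v \<le> g v \<and> g v \<le> snd b v"
    and h: "\<forall>v\<in>space P. fst b v \<le> h v \<and> h v \<le> snd b v"
    and q: "AE v in P. \<bar>q v\<bar> \<le> Bq" and Bq: "Bq \<ge> 0"
    and m: "(\<lambda>v. g v * q v - h v * q v) \<in> borel_measurable P"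
  shows "(\<integral>v. (g v * q v - h v * q v)^2 \<partial>P) \<le> Bq^2 * \<epsilon>^2"
proof -
  have l: "fst b \<in> L2 P" and u: "snd b \<in> L2 P" and lt: "L2norm P (\<lambda>v. snd b v - fst b v) < \<epsilon>"
    using b unfolding eps_bracket_def by auto
  have ud: "(\<lambda>v. snd b v - fst b v) \<in> L2 P" by (rule L2_diff[OF u l])
  then have iud: "integrable P (\<lambda>v. (snd b v - fst b v)^2)" by (rule L2_integrable_sq)
  have ae: "AE v in P. (g v * q v - h v * q v)^2 \<le> Bq^2 * (snd b v - fst b v)^2"
    using q
  proof (rule AE_mp)
    show "AE v in P. \<bar>q v\<bar> \<le> Bq \<longrightarrow> (g v * q v - h v * q v)^2 \<le> Bq^2 * (snd b v - fst b v)^2"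
    proof (rule AE_I2, rule impI)
      fix v assume v: "v \<in> space P" and qv: "\<bar>q v\<bar> \<le> Bq"
      have "fst b v \<le> g v" "g v \<le> snd b v" "fst b v \<le> h v" "h v \<le> snd b v" using g h v by auto
      then have "\<bar>g v - h v\<bar> \<le> snd b v - fst b v" unfolding abs_le_iff by linarith
      then have "\<bar>g v - h v\<bar> * \<bar>q v\<bar> \<le> (snd b v - fst b v) * Bq"
        using qv by (intro mult_mono) auto
      then have "\<bar>g v * q v - h v * q v\<bar> \<le> Bq * (snd b v - fst b v)"
        by (simp add: left_diff_distrib[symmetric] abs_mult mult.commute)
      then have "\<bar>g v * q v - h v * q v\<bar>^2 \<le> (Bq * (snd b v - fst b v))^2"
        by (intro power_mono) auto
      then show "(g v * q v - h v * q v)^2 \<le> Bq^2 * (snd b v - fst b v)^2"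
        by (simp add: power_mult_distrib)
    qed
  qed
  have "(\<integral>v. (g v * q v - h v * q v)^2 \<partial>P) \<le> (\<integral>v. Bq^2 * (snd b v - fst b v)^2 \<partial>P)"
    by (rule integral_mono_AE'[OF _ ae]) (use iud in auto)
  also have "\<dots> = Bq^2 * (\<integral>v. (snd b v - fst b v)^2 \<partial>P)" by simp
  also have "\<dots> \<le> Bq^2 * \<epsilon>^2"
  proof (rule mult_left_mono)
    have z: "0 \<le> (\<integral>v. (snd b v - fst b v)^2 \<partial>P)" by (rule integral_nonneg_AE) auto
    have "sqrt (\<integral>v. (snd b v - fst b v)^2 \<partial>P) < \<epsilon>" using lt unfolding L2norm_def .
    then have "(\<integral>v. (snd b v - fst b v)^2 \<partial>P) < \<epsilon>^2" by (rule sqrt_lt_sq[OF z])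
    then show "(\<integral>v. (snd b v - fst b v)^2 \<partial>P) \<le> \<epsilon>^2" by simp
  qed simp
  finally show ?thesis .
qed

lemma net:
  fixes rr :: "nat \<Rightarrow> 't \<Rightarrow> 'v \<Rightarrow> real" and qq :: "nat \<Rightarrow> nat \<Rightarrow> 'v \<Rightarrow> real"
    and J2 :: "(nat \<times> nat) set" and T :: "'t set"
  assumes P: "prob_space P" and J2: "finite J2" and T: "finite T"
    and BS: "finite BS" "\<forall>b\<in>BS. eps_bracket P \<epsilon> b"
    and cover: "\<And>j kk \<theta>. (j,kk) \<in> J2 \<Longrightarrow> \<theta> \<in> T \<Longrightarrow> \<exists>b\<in>BS. \<forall>v\<in>space P. fst b v \<le> rr j \<theta> v \<and> rr j \<theta> v \<le> snd b v"
    and qb: "\<And>j kk. (j,kk) \<in> J2 \<Longrightarrow> AE v in P. \<bar>qq j kk v\<bar> \<le> Bq" and Bq: "Bq \<ge> 0"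
    and fm: "\<And>j kk \<theta>. (j,kk) \<in> J2 \<Longrightarrow> \<theta> \<in> T \<Longrightarrow> (\<lambda>v. rr j \<theta> v * qq j kk v) \<in> borel_measurable P"
  shows "\<exists>\<pi>. (\<forall>s\<in>J2\<times>T. \<pi> s \<in> J2\<times>T \<and> fst (\<pi> s) = fst s \<and>
            (\<integral>v. (rr (fst (fst s)) (snd s) v * qq (fst (fst s)) (snd (fst s)) v
                 - rr (fst (fst s)) (snd (\<pi> s)) v * qq (fst (fst s)) (snd (fst s)) v)^2 \<partial>P) \<le> Bq^2 * \<epsilon>^2)
          \<and> card (\<pi> ` (J2\<times>T)) \<le> card J2 * card BS"
proof -
  define cont where "cont = (\<lambda>(g::'v \<Rightarrow> real) (b::('v \<Rightarrow> real) \<times> ('v \<Rightarrow> real)). \<forall>v\<in>space P. fst b v \<le> g v \<and> g v \<le> snd b v)"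
  define br where "br = (\<lambda>j \<theta>. SOME b. b \<in> BS \<and> cont (rr j \<theta>) b)"
  define rep where "rep = (\<lambda>j b. SOME \<theta>'. \<theta>' \<in> T \<and> br j \<theta>' = b)"
  define \<pi> where "\<pi> = (\<lambda>s::(nat\<times>nat)\<times>'t. (fst s, rep (fst (fst s)) (br (fst (fst s)) (snd s))))"
  have br: "br j \<theta> \<in> BS \<and> cont (rr j \<theta>) (br j \<theta>)" if "(j,kk) \<in> J2" "\<theta> \<in> T" for j kk \<theta>
  proof -
    have "\<exists>b. b \<in> BS \<and> cont (rr j \<theta>) b" using cover[OF that] unfolding cont_def by blast
    then show ?thesis unfolding br_def by (rule someI_ex)
  qed
  have rep: "rep j (br j \<theta>) \<in> T \<and> br j (rep j (br j \<theta>)) = br j \<theta>" if "\<theta> \<in> T" for j \<theta>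
  proof -
    have "\<exists>\<theta>'. \<theta>' \<in> T \<and> br j \<theta>' = br j \<theta>" using that by blast
    then show ?thesis unfolding rep_def by (rule someI_ex)
  qed
  have main: "\<pi> s \<in> J2\<times>T \<and> fst (\<pi> s) = fst s \<and>
            (\<integral>v. (rr (fst (fst s)) (snd s) v * qq (fst (fst s)) (snd (fst s)) v
                 - rr (fst (fst s)) (snd (\<pi> s)) v * qq (fst (fst s)) (snd (fst s)) v)^2 \<partial>P) \<le> Bq^2 * \<epsilon>^2"
    if s: "s \<in> J2\<times>T" for s
  proof -
    obtain j kk \<theta> where sj: "s = ((j,kk),\<theta>)" and jk: "(j,kk) \<in> J2" and th: "\<theta> \<in> T" using s by auto
    define \<theta>' where "\<theta>' = rep j (br j \<theta>)"
    have ps: "\<pi> ((j,kk),\<theta>) = ((j,kk),\<theta>')" unfolding \<pi>_def \<theta>'_def by simp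
    have th': "\<theta>' \<in> T" and bb: "br j \<theta>' = br j \<theta>" using rep[OF th, of j] unfolding \<theta>'_def by auto
    have b1: "br j \<theta> \<in> BS" and c1: "cont (rr j \<theta>) (br j \<theta>)" using br[OF jk th] by auto
    have c2: "cont (rr j \<theta>') (br j \<theta>)" using br[OF jk th'] bb by auto
    have eb: "eps_bracket P \<epsilon> (br j \<theta>)" using BS(2) b1 by auto
    have m: "(\<lambda>v. rr j \<theta> v * qq j kk v - rr j \<theta>' v * qq j kk v) \<in> borel_measurable P"
      using fm[OF jk th] fm[OF jk th'] by measurable
    have "(\<integral>v. (rr j \<theta> v * qq j kk v - rr j \<theta>' v * qq j kk v)^2 \<partial>P) \<le> Bq^2 * \<epsilon>^2"
      by (rule bracket_pair_bound[OF P eb _ _ qb[OF jk] Bq m]) (use c1 c2 in \<open>auto simp: cont_def\<close>)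
    then show ?thesis using jk th' unfolding sj ps by simp
  qed
  have "\<pi> ` (J2\<times>T) \<subseteq> (\<lambda>(jk,b). (jk, rep (fst jk) b)) ` (J2 \<times> BS)"
  proof
    fix x assume "x \<in> \<pi> ` (J2\<times>T)"
    then obtain j kk \<theta> where x: "x = \<pi> ((j,kk),\<theta>)" and jk: "(j,kk) \<in> J2" and th: "\<theta> \<in> T" by auto
    have "x = (\<lambda>(jk,b). (jk, rep (fst jk) b)) ((j,kk), br j \<theta>)" unfolding x \<pi>_def by simp
    moreover have "((j,kk), br j \<theta>) \<in> J2 \<times> BS" using jk br[OF jk th] by auto
    ultimately show "x \<in> (\<lambda>(jk,b). (jk, rep (fst jk) b)) ` (J2 \<times> BS)" by blast
  qed
  then have "card (\<pi> ` (J2\<times>T)) \<le> card ((\<lambda>(jk,b). (jk, rep (fst jk) b)) ` (J2 \<times> BS))"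
    using J2 BS by (intro card_mono) auto
  also have "\<dots> \<le> card (J2 \<times> BS)" by (rule card_image_le) (use J2 BS in auto)
  also have "\<dots> = card J2 * card BS" by (rule card_cartesian_product)
  finally show ?thesis using main by blast
qed

lemma ln2_half: "1/2 < ln (2::real)"
proof -
  have "ln (4::real) = 2 * ln 2" using ln_realpow[of 2 2] by simp
  then show ?thesis using ln4_gt1 by linarith
qed

lemma arith_L1:
  fixes Nn n :: real
  assumes Nn: "2 \<le> Nn" and n: "1 \<le> n"
  shows "sqrt (2 * ln (2 * (Nn * n))) \<le> 2 * sqrt (ln Nn) * sqrt (1 + ln n)"
proof -
  define L where "L = ln Nn"
  have L2: "ln 2 \<le> L" unfolding L_def using Nn by simp
  have Lh: "1/2 < L" using L2 ln2_half by linarith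
  have ln0: "0 \<le> ln n" using n by simp
  have e: "ln (2 * (Nn * n)) = ln 2 + L + ln n" unfolding L_def using Nn n by (simp add: ln_mult)
  have "0 \<le> (4*L - 2) * ln n" using Lh ln0 by (intro mult_nonneg_nonneg) auto
  then have "2 * ln (2 * (Nn * n)) \<le> 4 * L * (1 + ln n)" unfolding e using L2 by (simp add: algebra_simps)
  then have "sqrt (2 * ln (2 * (Nn * n))) \<le> sqrt (4 * L * (1 + ln n))" by simp
  also have "\<dots> = 2 * sqrt L * sqrt (1 + ln n)"
    by (simp add: real_sqrt_mult real_sqrt_four)
  finally show ?thesis unfolding L_def .
qed

lemma arith_L2:
  fixes Nn a b :: real
  assumes Nn: "2 \<le> Nn" and a: "1 \<le> a" and b: "1 \<le> b"
  shows "sqrt (2 * ln (2 * ((Nn * a) * (Nn * b)))) \<le> 3 * sqrt (ln Nn) * (sqrt (1 + ln a) + sqrt (1 + ln b))"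
proof -
  define L where "L = ln Nn"
  have L2: "ln 2 \<le> L" unfolding L_def using Nn by simp
  have Lh: "1/2 < L" using L2 ln2_half by linarith
  have la: "0 \<le> ln a" using a by simp
  have lb: "0 \<le> ln b" using b by simp
  have e: "ln (2 * ((Nn * a) * (Nn * b))) = ln 2 + 2 * L + ln a + ln b" unfolding L_def using Nn a b
    by (simp add: ln_mult)
  have "0 \<le> (9*L - 2) * ln a" using Lh la by (intro mult_nonneg_nonneg) auto
  moreover have "0 \<le> (9*L - 2) * ln b" using Lh lb by (intro mult_nonneg_nonneg) auto
  ultimately have i1: "2 * ln (2 * ((Nn * a) * (Nn * b))) \<le> 9 * L * ((1 + ln a) + (1 + ln b))"
    unfolding e using L2 Lh by (simp add: algebra_simps)
  define sa where "sa = sqrt (1 + ln a)"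
  define sb where "sb = sqrt (1 + ln b)"
  have sa2: "sa^2 = 1 + ln a" unfolding sa_def using la by simp
  have sb2: "sb^2 = 1 + ln b" unfolding sb_def using lb by simp
  have sap: "0 \<le> sa" "0 \<le> sb" unfolding sa_def sb_def using la lb by auto
  have "(1 + ln a) + (1 + ln b) \<le> (sa + sb)^2" unfolding power2_sum sa2 sb2 using sap by simp
  then have "9 * L * ((1 + ln a) + (1 + ln b)) \<le> 9 * L * (sa + sb)^2" using Lh by (intro mult_left_mono) auto
  with i1 have "sqrt (2 * ln (2 * ((Nn * a) * (Nn * b)))) \<le> sqrt (9 * L * (sa + sb)^2)" by simp
  also have "\<dots> = 3 * sqrt L * (sa + sb)" using sap
    by (simp add: real_sqrt_mult real_sqrt_abs)
  finally show ?thesis unfolding L_def sa_def sb_def .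
qed

lemma sum_shift_le:
  fixes f :: "nat \<Rightarrow> real"
  assumes "\<And>k. 0 \<le> f k"
  shows "(\<Sum>k<K. f (Suc k)) \<le> (\<Sum>k\<le>K. f k)"
proof -
  have "(\<Sum>k\<le>K. f k) = (\<Sum>k<Suc K. f k)" by (simp add: lessThan_Suc_atMost)
  also have "\<dots> = f 0 + (\<Sum>k<K. f (Suc k))" by (rule sum.lessThan_Suc_shift)
  finally show ?thesis using assms[of 0] by simp
qed

lemma final_arith:
  fixes n :: "nat \<Rightarrow> real"
  assumes Nn: "2 \<le> Nn" and B: "0 \<le> B" and \<delta>: "0 < \<delta>" and n1: "\<And>k. 1 \<le> n k"
    and A: "(\<Sum>k\<le>K. (\<delta>/2^k) * sqrt (1 + ln (n k))) \<le> 2 * J"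
    and z: "z \<le> B * \<delta>"
  shows "(B * \<delta>) * sqrt (2 * ln (2 * (Nn * n 0)))
         + (\<Sum>k<K. (2 * B * (\<delta>/2^k)) * sqrt (2 * ln (2 * ((Nn * n (Suc k)) * (Nn * n k))))) + z
         \<le> 44 * sqrt (ln Nn) * B * J"
proof -
  define sL where "sL = sqrt (ln Nn)"
  define a where "a = (\<lambda>k. sqrt (1 + ln (n k)))"
  define e where "e = (\<lambda>k::nat. \<delta>/2^k)"
  define A' where "A' = (\<Sum>k\<le>K. e k * a k)"
  have a1: "1 \<le> a k" for k unfolding a_def using n1[of k] by simp
  have ep: "0 < e k" for k unfolding e_def using \<delta> by simp
  have ea: "0 \<le> e k * a k" for k using a1[of k] ep[of k] by simp
  have A'J: "A' \<le> 2 * J" using A unfolding A'_def e_def a_def .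
  have sL0: "0 \<le> sL" unfolding sL_def using Nn by simp
  have sLh: "1 \<le> 2 * sL"
  proof -
    have "ln 2 \<le> ln Nn" using Nn by simp
    then have "1/4 \<le> ln Nn" using ln2_half by linarith
    then have "sqrt (1/4) \<le> sL" unfolding sL_def by simp
    moreover have "sqrt (1/4::real) = 1/2" by (simp add: real_sqrt_divide real_sqrt_four)
    ultimately show ?thesis by simp
  qed
  have e0a0: "e 0 * a 0 \<le> A'" unfolding A'_def by (rule member_le_sum) (use ea in auto)
  have dA: "\<delta> \<le> A'" using e0a0 a1[of 0] ep[of 0] unfolding e_def by (smt (verit) mult_le_cancel_left1 power_0 div_by_1)
  have T0: "(B * \<delta>) * sqrt (2 * ln (2 * (Nn * n 0))) \<le> 2 * B * sL * A'"
  proof -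
    have "(B * \<delta>) * sqrt (2 * ln (2 * (Nn * n 0))) \<le> (B * \<delta>) * (2 * sL * a 0)"
      unfolding sL_def a_def using B \<delta> by (intro mult_left_mono arith_L1 Nn n1) auto
    also have "\<dots> = 2 * B * sL * (e 0 * a 0)" unfolding e_def by simp
    also have "\<dots> \<le> 2 * B * sL * A'" using e0a0 B sL0 by (intro mult_left_mono) auto
    finally show ?thesis .
  qed
  have Tk: "(\<Sum>k<K. (2 * B * (\<delta>/2^k)) * sqrt (2 * ln (2 * ((Nn * n (Suc k)) * (Nn * n k)))))
      \<le> (\<Sum>k<K. 6 * B * sL * (2 * (e (Suc k) * a (Suc k)) + e k * a k))"
  proof (rule sum_mono)
    fix k
    have "(2 * B * (\<delta>/2^k)) * sqrt (2 * ln (2 * ((Nn * n (Suc k)) * (Nn * n k))))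
        \<le> (2 * B * (\<delta>/2^k)) * (3 * sL * (a (Suc k) + a k))"
      unfolding sL_def a_def using B \<delta> by (intro mult_left_mono arith_L2 Nn n1) auto
    also have "\<dots> = 6 * B * sL * (2 * (e (Suc k) * a (Suc k)) + e k * a k)"
      unfolding e_def by (simp add: algebra_simps)
    finally show "(2 * B * (\<delta>/2^k)) * sqrt (2 * ln (2 * ((Nn * n (Suc k)) * (Nn * n k)))) \<le> \<dots>" .
  qed
  also have "\<dots> = 6 * B * sL * (2 * (\<Sum>k<K. e (Suc k) * a (Suc k)) + (\<Sum>k<K. e k * a k))"
    by (simp add: distrib_left sum_distrib_left sum.distrib)
  also have "\<dots> \<le> 6 * B * sL * (2 * A' + A')"
  proof (intro mult_left_mono add_mono)
    show "(\<Sum>k<K. e (Suc k) * a (Suc k)) \<le> A'" unfolding A'_def by (rule sum_shift_le[OF ea])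
    show "(\<Sum>k<K. e k * a k) \<le> A'" unfolding A'_def
      by (rule sum_mono2) (use ea in auto)
  qed (use B sL0 in auto)
  finally have Tk': "(\<Sum>k<K. (2 * B * (\<delta>/2^k)) * sqrt (2 * ln (2 * ((Nn * n (Suc k)) * (Nn * n k))))) \<le> 18 * B * sL * A'"
    by simp
  have zb: "z \<le> 2 * B * sL * A'"
  proof -
    have "B * \<delta> \<le> B * A'" using dA B by (intro mult_left_mono) auto
    also have "\<dots> \<le> B * A' * (2 * sL)"
    proof -
      have "0 \<le> B * A'" using B dA \<delta> by simp
      then have "B * A' * 1 \<le> B * A' * (2 * sL)" using sLh by (intro mult_left_mono) auto
      then show ?thesis by simp
    qed
    also have "\<dots> = 2 * B * sL * A'" by simp
    finally show ?thesis using z by linarith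
  qed
  have "(B * \<delta>) * sqrt (2 * ln (2 * (Nn * n 0)))
         + (\<Sum>k<K. (2 * B * (\<delta>/2^k)) * sqrt (2 * ln (2 * ((Nn * n (Suc k)) * (Nn * n k))))) + z
       \<le> 22 * B * sL * A'" using T0 Tk' zb by simp
  also have "\<dots> \<le> 22 * B * sL * (2 * J)" using A'J B sL0 by (intro mult_left_mono) auto
  also have "\<dots> = 44 * sqrt (ln Nn) * B * J" unfolding sL_def by simp
  finally show ?thesis .
qed

lemma rnorm_le:
  fixes x :: "nat \<Rightarrow> nat \<Rightarrow> real" and kn :: "nat \<Rightarrow> nat"
  assumes r: "r \<ge> 2" and M: "\<And>j kk. j \<in> {1..JJ} \<Longrightarrow> kk \<in> {1..kn j} \<Longrightarrow> \<bar>x j kk\<bar> \<le> M" and M0: "0 \<le> M"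
  shows "(\<Sum>j\<in>{1..JJ}. \<Sum>kk\<in>{1..kn j}. \<bar>x j kk\<bar> powr r) powr (1/r) \<le> real (\<Sum>j\<in>{1..JJ}. kn j) powr (1/r) * M"
proof -
  have "(\<Sum>j\<in>{1..JJ}. \<Sum>kk\<in>{1..kn j}. \<bar>x j kk\<bar> powr r) \<le> (\<Sum>j\<in>{1..JJ}. \<Sum>kk\<in>{1..kn j}. M powr r)"
    using M r by (intro sum_mono powr_mono2) auto
  also have "\<dots> = real (\<Sum>j\<in>{1..JJ}. kn j) * M powr r" by (simp add: sum_distrib_right)
  finally have s: "(\<Sum>j\<in>{1..JJ}. \<Sum>kk\<in>{1..kn j}. \<bar>x j kk\<bar> powr r) \<le> real (\<Sum>j\<in>{1..JJ}. kn j) * M powr r" .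
  have "(\<Sum>j\<in>{1..JJ}. \<Sum>kk\<in>{1..kn j}. \<bar>x j kk\<bar> powr r) powr (1/r) \<le> (real (\<Sum>j\<in>{1..JJ}. kn j) * M powr r) powr (1/r)"
  proof (rule powr_mono2)
    show "0 \<le> (\<Sum>j\<in>{1..JJ}. \<Sum>kk\<in>{1..kn j}. \<bar>x j kk\<bar> powr r)"
      by (intro sum_nonneg) simp
  qed (use s r in auto)
  also have "\<dots> = real (\<Sum>j\<in>{1..JJ}. kn j) powr (1/r) * (M powr r) powr (1/r)" by (simp add: powr_mult)
  also have "(M powr r) powr (1/r) = M" using r M0 by (simp add: powr_powr)
  finally show ?thesis .
qed

lemma main_bound:
  fixes P :: "('x \<times> (nat \<Rightarrow> 'z)) measure" and Q :: "'w measure"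
    and \<rho> :: "nat \<Rightarrow> 'x \<Rightarrow> 't \<Rightarrow> real" and qn :: "nat \<Rightarrow> nat \<Rightarrow> 'z \<Rightarrow> real" and kn :: "nat \<Rightarrow> nat"
    and F :: "'x \<times> (nat \<Rightarrow> 'z) \<Rightarrow> real" and Wn :: "(('x \<times> (nat \<Rightarrow> 'z)) \<Rightarrow> real) \<Rightarrow> 'w \<Rightarrow> real"
    and Th :: "'t set" and T :: "'t set"
  assumes Pp: "prob_space P" and r_ge: "r \<ge> 2" and kn_ge: "(\<Sum>j\<in>{1..JJ}. kn j) \<ge> 2"
    and rho_meas: "\<And>j \<theta>. j \<in> {1..JJ} \<Longrightarrow> \<theta> \<in> Th \<Longrightarrow> (\<lambda>v. \<rho> j (fst v) \<theta>) \<in> borel_measurable P"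
    and q_meas: "\<And>j kk. j \<in> {1..JJ} \<Longrightarrow> kk \<in> {1..kn j} \<Longrightarrow> (\<lambda>v. qn j kk (snd v j)) \<in> borel_measurable P"
    and a_B: "Bn \<ge> 1"
    and a_q: "\<And>j kk. j \<in> {1..JJ} \<Longrightarrow> kk \<in> {1..kn j} \<Longrightarrow> AE v in P. \<bar>qn j kk (snd v j)\<bar> \<le> Bn"
    and Fm: "F \<in> borel_measurable P"
    and b_env: "\<And>j \<theta> v. j \<in> {1..JJ} \<Longrightarrow> \<theta> \<in> Th \<Longrightarrow> \<bar>\<rho> j (fst v) \<theta>\<bar> \<le> F v"
    and F2: "(\<integral>\<^sup>+ v. ennreal ((F v)^2) \<partial>P) < \<infinity>"
    and c_J: "bracketing_integral P (L2norm P F) {(\<lambda>v. \<rho> j (fst v) \<theta>) | j \<theta>. j \<in> {1..JJ} \<and> \<theta> \<in> Th} \<le> ennreal Jn"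
    and iso: "isonormal P Q Wn"
    and T: "finite T" "T \<noteq> {}" "T \<subseteq> Th"
  shows "(\<integral>\<^sup>+ w. ennreal (Max ((\<lambda>\<theta>. (\<Sum>j\<in>{1..JJ}. \<Sum>kk\<in>{1..kn j}.
              \<bar>Wn (\<lambda>v. \<rho> j (fst v) \<theta> * qn j kk (snd v j)) w\<bar> powr r) powr (1 / r)) ` T)) \<partial>Q)
      \<le> ennreal (44 * real (\<Sum>j\<in>{1..JJ}. kn j) powr (1 / r) * sqrt (ln (real (\<Sum>j\<in>{1..JJ}. kn j))) * Bn * Jn)"
proof -
  define Nn where "Nn = (\<Sum>j\<in>{1..JJ}. kn j)"
  define J2 where "J2 = Sigma {1..JJ} (\<lambda>j. {1..kn j})"
  define I where "I = J2 \<times> T"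
  define f where "f = (\<lambda>(s::(nat\<times>nat)\<times>'t) v. \<rho> (fst (fst s)) (fst v) (snd s) * qn (fst (fst s)) (snd (fst s)) (snd v (fst (fst s))))"
  define X where "X = (\<lambda>s. Wn (f s))"
  define M where "M = (\<lambda>w. Max ((\<lambda>s. \<bar>X s w\<bar>) ` I))"
  have J2fin: "finite J2" unfolding J2_def by auto
  have cJ2: "card J2 = Nn" unfolding J2_def Nn_def by (simp add: card_SigmaI)
  have J2ne: "J2 \<noteq> {}" using cJ2 kn_ge unfolding Nn_def by auto
  have Ifin: "finite I" unfolding I_def using J2fin T by auto
  have Ine: "I \<noteq> {}" unfolding I_def using J2ne T by auto
  have Qp: "prob_space Q" using iso unfolding isonormal_def by auto
  have memI: "fst (fst s) \<in> {1..JJ} \<and> snd (fst s) \<in> {1..kn (fst (fst s))} \<and> snd s \<in> Th" if "s \<in> I" for s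
    using that T(3) unfolding I_def J2_def by auto
  have F2i: "integrable P (\<lambda>v. (F v)^2)" by (rule integrableI_nonneg) (use Fm F2 in auto)
  define \<delta> where "\<delta> = L2norm P F"
  have F2nn: "0 \<le> (\<integral>v. (F v)^2 \<partial>P)" by (rule integral_nonneg_AE) auto
  have \<delta>2: "\<delta>^2 = (\<integral>v. (F v)^2 \<partial>P)" unfolding \<delta>_def L2norm_def using F2nn by simp
  have \<delta>0: "0 \<le> \<delta>" unfolding \<delta>_def L2norm_def by simp
  have fm: "f s \<in> borel_measurable P" if "s \<in> I" for s
  proof -
    have "(\<lambda>v. \<rho> (fst (fst s)) (fst v) (snd s)) \<in> borel_measurable P" using rho_meas memI[OF that] by auto
    moreover have "(\<lambda>v. qn (fst (fst s)) (snd (fst s)) (snd v (fst (fst s)))) \<in> borel_measurable P"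
      using q_meas memI[OF that] by auto
    ultimately show ?thesis unfolding f_def by simp
  qed
  have fAE: "AE v in P. (f s v)^2 \<le> Bn^2 * (F v)^2" if "s \<in> I" for s
  proof -
    have "AE v in P. \<bar>qn (fst (fst s)) (snd (fst s)) (snd v (fst (fst s)))\<bar> \<le> Bn" using a_q memI[OF that] by auto
    then show ?thesis
    proof (rule AE_mp, intro AE_I2 impI)
      fix v :: "'x \<times> (nat \<Rightarrow> 'z)" assume qv: "\<bar>qn (fst (fst s)) (snd (fst s)) (snd v (fst (fst s)))\<bar> \<le> Bn"
      have rv: "\<bar>\<rho> (fst (fst s)) (fst v) (snd s)\<bar> \<le> F v" using b_env memI[OF that] by auto
      have "\<bar>f s v\<bar> \<le> F v * Bn" unfolding f_def using qv rv by (simp add: abs_mult mult_mono)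
      then have "\<bar>f s v\<bar>^2 \<le> (F v * Bn)^2" by (intro power_mono) auto
      then show "(f s v)^2 \<le> Bn^2 * (F v)^2" by (simp add: power_mult_distrib mult.commute)
    qed
  qed
  have fL2: "f s \<in> L2 P" if "s \<in> I" for s
  proof -
    have "integrable P (\<lambda>v. (f s v)^2)"
    proof (rule Bochner_Integration.integrable_bound)
      show "integrable P (\<lambda>v. Bn^2 * (F v)^2)" using F2i by simp
      show "(\<lambda>v. (f s v)^2) \<in> borel_measurable P" using fm[OF that] by measurable
      show "AE v in P. norm ((f s v)^2) \<le> norm (Bn^2 * (F v)^2)" using fAE[OF that] by auto
    qed
    then show ?thesis using fm[OF that] unfolding L2_def by auto
  qed
  have fint: "(\<integral>v. (f s v)^2 \<partial>P) \<le> (Bn * \<delta>)^2" if "s \<in> I" for s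
  proof -
    have "(\<integral>v. (f s v)^2 \<partial>P) \<le> (\<integral>v. Bn^2 * (F v)^2 \<partial>P)"
      by (rule integral_mono_AE'[OF _ fAE[OF that]]) (use F2i in auto)
    also have "\<dots> = (Bn * \<delta>)^2" using \<delta>2 by (simp add: power_mult_distrib)
    finally show ?thesis .
  qed
  have Xg: "\<exists>v. centered_gaussian Q (X s) v \<and> v \<le> (Bn * \<delta>)^2" if "s \<in> I" for s
    using iso_single[OF iso fL2[OF that]] varP_le[OF Pp fL2[OF that]] fint[OF that] unfolding X_def
    by (meson order_trans)
  have Xm: "X s \<in> borel_measurable Q" if "s \<in> I" for s using Xg[OF that] cg_meas by blast
  have Mm: "M \<in> borel_measurable Q" unfolding M_def
    by (rule borel_measurable_Max[OF Ifin]) (use Xm in auto)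
  have Mge: "\<bar>X s w\<bar> \<le> M w" if "s \<in> I" for s w unfolding M_def using Ifin that by (intro Max_ge) auto
  have M0: "0 \<le> M w" for w using Mge[of _ w] Ine by (meson abs_ge_zero all_not_in_conv order_trans)
  have step1: "Max ((\<lambda>\<theta>. (\<Sum>j\<in>{1..JJ}. \<Sum>kk\<in>{1..kn j}.
              \<bar>Wn (\<lambda>v. \<rho> j (fst v) \<theta> * qn j kk (snd v j)) w\<bar> powr r) powr (1 / r)) ` T)
        \<le> real Nn powr (1/r) * M w" for w
  proof (subst Max_le_iff)
    show "finite ((\<lambda>\<theta>. (\<Sum>j\<in>{1..JJ}. \<Sum>kk\<in>{1..kn j}.
              \<bar>Wn (\<lambda>v. \<rho> j (fst v) \<theta> * qn j kk (snd v j)) w\<bar> powr r) powr (1 / r)) ` T)" using T by auto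
    show "(\<lambda>\<theta>. (\<Sum>j\<in>{1..JJ}. \<Sum>kk\<in>{1..kn j}.
              \<bar>Wn (\<lambda>v. \<rho> j (fst v) \<theta> * qn j kk (snd v j)) w\<bar> powr r) powr (1 / r)) ` T \<noteq> {}" using T by auto
    show "\<forall>a\<in>(\<lambda>\<theta>. (\<Sum>j\<in>{1..JJ}. \<Sum>kk\<in>{1..kn j}.
              \<bar>Wn (\<lambda>v. \<rho> j (fst v) \<theta> * qn j kk (snd v j)) w\<bar> powr r) powr (1 / r)) ` T. a \<le> real Nn powr (1/r) * M w"
    proof
      fix a assume "a \<in> (\<lambda>\<theta>. (\<Sum>j\<in>{1..JJ}. \<Sum>kk\<in>{1..kn j}.
              \<bar>Wn (\<lambda>v. \<rho> j (fst v) \<theta> * qn j kk (snd v j)) w\<bar> powr r) powr (1 / r)) ` T"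
      then obtain \<theta> where th: "\<theta> \<in> T" and a: "a = (\<Sum>j\<in>{1..JJ}. \<Sum>kk\<in>{1..kn j}.
              \<bar>Wn (\<lambda>v. \<rho> j (fst v) \<theta> * qn j kk (snd v j)) w\<bar> powr r) powr (1 / r)" by auto
      have "a \<le> real (\<Sum>j\<in>{1..JJ}. kn j) powr (1/r) * M w" unfolding a
      proof (rule rnorm_le[OF r_ge _ M0])
        fix j kk assume j: "j \<in> {1..JJ}" and kk: "kk \<in> {1..kn j}"
        have sI: "((j,kk),\<theta>) \<in> I" unfolding I_def J2_def using j kk th by auto
        have "Wn (\<lambda>v. \<rho> j (fst v) \<theta> * qn j kk (snd v j)) w = X ((j,kk),\<theta>) w" unfolding X_def f_def by simp
        then show "\<bar>Wn (\<lambda>v. \<rho> j (fst v) \<theta> * qn j kk (snd v j)) w\<bar> \<le> M w" using Mge[OF sI, of w] by simp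
      qed
      then show "a \<le> real Nn powr (1/r) * M w" unfolding Nn_def .
    qed
  qed
  have step2: "(\<integral>\<^sup>+ w. ennreal (M w) \<partial>Q) \<le> ennreal (44 * sqrt (ln (real Nn)) * Bn * Jn)"
  proof (cases "\<delta> = 0")
    case True
    have "(\<integral>\<^sup>+ w. ennreal (M w) \<partial>Q) \<le> ennreal (0 * sqrt (2 * ln (2 * real (card (X ` I)))))"
      unfolding M_def
    proof (rule gauss_max_img[OF Qp Ifin Ine])
      show "\<exists>v. centered_gaussian Q (X s) v \<and> v \<le> 0^2" if "s \<in> I" for s using Xg[OF that] True by simp
    qed auto
    also have "\<dots> \<le> ennreal (44 * sqrt (ln (real Nn)) * Bn * Jn)" by simp
    finally show ?thesis .
  next
    case False
    then have \<delta>p: "0 < \<delta>" using \<delta>0 by simp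
    define Cls :: "('x \<times> (nat \<Rightarrow> 'z) \<Rightarrow> real) set" where "Cls = {(\<lambda>v. \<rho> j (fst v) \<theta>) | j \<theta>. j \<in> {1..JJ} \<and> \<theta> \<in> Th}"
    define N where "N = (\<lambda>e. bracketing_number P e Cls)"
    have anti: "\<And>a b. 0 < a \<Longrightarrow> a \<le> b \<Longrightarrow> N b \<le> N a" unfolding N_def by (rule bracketing_number_anti)
    have Jb: "(\<integral>\<^sup>+ e. indicator {0..\<delta>} e * phi (N e) \<partial>lborel) \<le> ennreal Jn"
      using c_J unfolding bracketing_integral_def phi_def N_def \<delta>_def Cls_def .
    have fin: "N (\<delta>/2^k) \<noteq> \<infinity>" for k by (rule bracket_int_lower(1)[OF anti \<delta>p Jb])
    define nk where "nk = (\<lambda>k. the_enat (N (\<delta>/2^k)))"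
    have Nk: "N (\<delta>/2^k) = enat (nk k)" for k using fin[of k] unfolding nk_def by (cases "N (\<delta>/2^k)") auto
    have "\<forall>k. \<exists>BS. finite BS \<and> card BS = nk k \<and> (\<forall>b\<in>BS. eps_bracket P (\<delta>/2^k) b) \<and>
           (\<forall>g\<in>Cls. \<exists>b\<in>BS. \<forall>v\<in>space P. fst b v \<le> g v \<and> g v \<le> snd b v)"
    proof
      fix k show "\<exists>BS. finite BS \<and> card BS = nk k \<and> (\<forall>b\<in>BS. eps_bracket P (\<delta>/2^k) b) \<and>
           (\<forall>g\<in>Cls. \<exists>b\<in>BS. \<forall>v\<in>space P. fst b v \<le> g v \<and> g v \<le> snd b v)"
        by (rule bracket_set) (use Nk[of k] in \<open>simp add: N_def\<close>)
    qed
    note exB = this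
    obtain BSf where BSf': "\<forall>k. finite (BSf k) \<and> card (BSf k) = nk k \<and> (\<forall>b\<in>BSf k. eps_bracket P (\<delta>/2^k) b) \<and>
           (\<forall>g\<in>Cls. \<exists>b\<in>BSf k. \<forall>v\<in>space P. fst b v \<le> g v \<and> g v \<le> snd b v)"
      using choice[OF exB] by (elim exE) blast
    note BSf = BSf'[rule_format]
    have "\<forall>k. \<exists>\<pi>. (\<forall>s\<in>J2\<times>T. \<pi> s \<in> J2\<times>T \<and> fst (\<pi> s) = fst s \<and>
            (\<integral>v. ((\<lambda>j \<theta> v. \<rho> j (fst v) \<theta>) (fst (fst s)) (snd s) v * (\<lambda>j kk v. qn j kk (snd v j)) (fst (fst s)) (snd (fst s)) v
                 - (\<lambda>j \<theta> v. \<rho> j (fst v) \<theta>) (fst (fst s)) (snd (\<pi> s)) v * (\<lambda>j kk v. qn j kk (snd v j)) (fst (fst s)) (snd (fst s)) v)^2 \<partial>P) \<le> Bn^2 * (\<delta>/2^k)^2)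
          \<and> card (\<pi> ` (J2\<times>T)) \<le> card J2 * card (BSf k)"
    proof
      fix k
      show "\<exists>\<pi>. (\<forall>s\<in>J2\<times>T. \<pi> s \<in> J2\<times>T \<and> fst (\<pi> s) = fst s \<and>
            (\<integral>v. ((\<lambda>j \<theta> v. \<rho> j (fst v) \<theta>) (fst (fst s)) (snd s) v * (\<lambda>j kk v. qn j kk (snd v j)) (fst (fst s)) (snd (fst s)) v
                 - (\<lambda>j \<theta> v. \<rho> j (fst v) \<theta>) (fst (fst s)) (snd (\<pi> s)) v * (\<lambda>j kk v. qn j kk (snd v j)) (fst (fst s)) (snd (fst s)) v)^2 \<partial>P) \<le> Bn^2 * (\<delta>/2^k)^2)
          \<and> card (\<pi> ` (J2\<times>T)) \<le> card J2 * card (BSf k)"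
      proof (rule net[OF Pp J2fin T(1)])
        show "finite (BSf k)" "\<forall>b\<in>BSf k. eps_bracket P (\<delta>/2^k) b" using BSf[of k] by auto
        show "\<exists>b\<in>BSf k. \<forall>v\<in>space P. fst b v \<le> \<rho> j (fst v) \<theta> \<and> \<rho> j (fst v) \<theta> \<le> snd b v"
          if "(j,kk) \<in> J2" "\<theta> \<in> T" for j kk \<theta>
        proof -
          have "(\<lambda>v. \<rho> j (fst v) \<theta>) \<in> Cls" unfolding Cls_def using that T(3) unfolding J2_def by auto
          then show ?thesis using BSf[of k] by auto
        qed
        show "AE v in P. \<bar>qn j kk (snd v j)\<bar> \<le> Bn" if "(j,kk) \<in> J2" for j kk
          using a_q that unfolding J2_def by auto
        show "0 \<le> Bn" using a_B by simp
        show "(\<lambda>v. \<rho> j (fst v) \<theta> * qn j kk (snd v j)) \<in> borel_measurable P"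
          if "(j,kk) \<in> J2" "\<theta> \<in> T" for j kk \<theta>
        proof -
          have "(\<lambda>v. \<rho> j (fst v) \<theta>) \<in> borel_measurable P" using rho_meas that T(3) unfolding J2_def by auto
          moreover have "(\<lambda>v. qn j kk (snd v j)) \<in> borel_measurable P" using q_meas that unfolding J2_def by auto
          ultimately show ?thesis by simp
        qed
      qed
    qed
    note exP = this
    obtain \<pi> where \<pi>': "\<forall>k. (\<forall>s\<in>J2\<times>T. \<pi> k s \<in> J2\<times>T \<and> fst (\<pi> k s) = fst s \<and>
            (\<integral>v. ((\<lambda>j \<theta> v. \<rho> j (fst v) \<theta>) (fst (fst s)) (snd s) v * (\<lambda>j kk v. qn j kk (snd v j)) (fst (fst s)) (snd (fst s)) v
                 - (\<lambda>j \<theta> v. \<rho> j (fst v) \<theta>) (fst (fst s)) (snd (\<pi> k s)) v * (\<lambda>j kk v. qn j kk (snd v j)) (fst (fst s)) (snd (fst s)) v)^2 \<partial>P) \<le> Bn^2 * (\<delta>/2^k)^2)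
          \<and> card (\<pi> k ` (J2\<times>T)) \<le> card J2 * card (BSf k)"
      using choice[OF exP] by (elim exE) blast
    note \<pi> = \<pi>'[rule_format]
    have \<pi>I: "\<pi> k s \<in> I" if "s \<in> I" for k s using \<pi>[of k] that unfolding I_def by auto
    have d1: "(\<integral>v. (f s v - f (\<pi> k s) v)^2 \<partial>P) \<le> (Bn * (\<delta>/2^k))^2" if "s \<in> I" for k s
    proof -
      have sJ: "s \<in> J2 \<times> T" using that unfolding I_def .
      note h = bspec[OF conjunct1[OF \<pi>[of k]] sJ]
      have e: "fst (\<pi> k s) = fst s" using h by blast
      have "(\<lambda>v. (f s v - f (\<pi> k s) v)^2) = (\<lambda>v. ((\<lambda>j \<theta> v. \<rho> j (fst v) \<theta>) (fst (fst s)) (snd s) v * (\<lambda>j kk v. qn j kk (snd v j)) (fst (fst s)) (snd (fst s)) v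
                 - (\<lambda>j \<theta> v. \<rho> j (fst v) \<theta>) (fst (fst s)) (snd (\<pi> k s)) v * (\<lambda>j kk v. qn j kk (snd v j)) (fst (fst s)) (snd (fst s)) v)^2)"
        unfolding f_def using e by simp
      moreover have "Bn^2 * (\<delta>/2^k)^2 = (Bn * (\<delta>/2^k))^2" by (rule power_mult_distrib[symmetric])
      ultimately show ?thesis using h by simp
    qed
    have d1': "(\<integral>v. (f (\<pi> k s) v - f s v)^2 \<partial>P) \<le> (Bn * (\<delta>/2^k))^2" if "s \<in> I" for k s
      using d1[OF that, of k] by (simp add: power2_commute)
    have ck: "real (card (\<pi> k ` I)) \<le> real Nn * real (nk k)" for k
    proof -
      have "card (\<pi> k ` I) \<le> Nn * nk k" using \<pi>[of k] BSf[of k] cJ2 unfolding I_def by simp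
      then show ?thesis by (simp only: of_nat_mult[symmetric] of_nat_le_iff)
    qed
    have ck1: "1 \<le> real Nn * real (nk k)" for k
    proof -
      have "\<pi> k ` I \<noteq> {}" using Ine by simp
      then have "1 \<le> card (\<pi> k ` I)" using Ifin by (simp add: Suc_le_eq card_gt_0_iff)
      then show ?thesis using ck[of k] by linarith
    qed
    have nk1: "1 \<le> real (nk k)" for k
    proof (rule ccontr)
      assume "\<not> 1 \<le> real (nk k)"
      then have "nk k = 0" by simp
      then show False using ck1[of k] by simp
    qed
    obtain K where K: "sqrt (2 * ln (2 * real (card I))) < 2^K" using real_arch_pow[of 2] by auto
    have chain: "(\<integral>\<^sup>+ w. ennreal (Max ((\<lambda>s. \<bar>X s w\<bar>) ` I)) \<partial>Q) \<le>
       ennreal ((Bn * \<delta>) * sqrt (2*ln(2*(real Nn * real (nk 0))))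
         + (\<Sum>k<K. (2 * Bn * (\<delta>/2^k)) * sqrt (2*ln(2*((real Nn * real (nk (Suc k))) * (real Nn * real (nk k))))))
         + (Bn * (\<delta>/2^K)) * sqrt (2*ln(2*real (card I))))"
    proof (rule chaining[OF Qp Ifin Ine \<pi>I])
      show "\<exists>v. centered_gaussian Q (X t) v \<and> v \<le> (Bn * \<delta>)^2" if "t \<in> I" for t by (rule Xg[OF that])
      show "\<exists>v. centered_gaussian Q (\<lambda>w. X (\<pi> (Suc k) s) w - X (\<pi> k s) w) v \<and> v \<le> (2 * Bn * (\<delta>/2^k))^2"
        if "k < K" "s \<in> I" for k s
      proof -
        have a: "\<pi> (Suc k) s \<in> I" and c: "\<pi> k s \<in> I" using \<pi>I that by auto
        have "varP P (\<lambda>v. f (\<pi> (Suc k) s) v - f (\<pi> k s) v) \<le> (\<integral>v. (f (\<pi> (Suc k) s) v - f (\<pi> k s) v)^2 \<partial>P)"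
          by (rule varP_le[OF Pp L2_diff[OF fL2[OF a] fL2[OF c]]])
        also have "\<dots> \<le> 2 * (\<integral>v. (f (\<pi> (Suc k) s) v - f s v)^2 \<partial>P) + 2 * (\<integral>v. (f s v - f (\<pi> k s) v)^2 \<partial>P)"
          by (rule sq_int_diff_le[OF fL2[OF a] fL2[OF that(2)] fL2[OF c]])
        also have "\<dots> \<le> 2 * (Bn * (\<delta>/2^(Suc k)))^2 + 2 * (Bn * (\<delta>/2^k))^2"
          using d1'[OF that(2), of "Suc k"] d1[OF that(2), of k] by linarith
        also have "\<dots> \<le> (2 * Bn * (\<delta>/2^k))^2" by (simp add: power_mult_distrib field_simps)
        finally show ?thesis using iso_diff[OF iso fL2[OF a] fL2[OF c]] unfolding X_def by blast
      qed
      show "\<exists>v. centered_gaussian Q (\<lambda>w. X s w - X (\<pi> K s) w) v \<and> v \<le> (Bn * (\<delta>/2^K))^2"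
        if "s \<in> I" for s
      proof -
        have c: "\<pi> K s \<in> I" using \<pi>I that by auto
        have "varP P (\<lambda>v. f s v - f (\<pi> K s) v) \<le> (\<integral>v. (f s v - f (\<pi> K s) v)^2 \<partial>P)"
          by (rule varP_le[OF Pp L2_diff[OF fL2[OF that] fL2[OF c]]])
        also have "\<dots> \<le> (Bn * (\<delta>/2^K))^2" by (rule d1[OF that])
        finally show ?thesis using iso_diff[OF iso fL2[OF that] fL2[OF c]] unfolding X_def by blast
      qed
      show "real (card (\<pi> k ` I)) \<le> real Nn * real (nk k)" for k by (rule ck)
      show "1 \<le> real Nn * real (nk k)" for k by (rule ck1)
      show "0 \<le> Bn * \<delta>" using a_B \<delta>0 by simp
      show "0 \<le> 2 * Bn * (\<delta>/2^k)" for k using a_B \<delta>0 by simp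
      show "0 \<le> Bn * (\<delta>/2^K)" using a_B \<delta>0 by simp
    qed
    have A: "(\<Sum>k\<le>K. (\<delta>/2^k) * sqrt (1 + ln (real (nk k)))) \<le> 2 * Jn"
      using bracket_int_lower(2)[OF anti \<delta>p Jb, of K] unfolding nk_def .
    have z: "(Bn * (\<delta>/2^K)) * sqrt (2*ln(2*real (card I))) \<le> Bn * \<delta>"
    proof -
      have "(\<delta>/2^K) * sqrt (2*ln(2*real (card I))) \<le> (\<delta>/2^K) * 2^K"
        using K \<delta>p by (intro mult_left_mono) auto
      also have "\<dots> = \<delta>" by simp
      finally have "(\<delta>/2^K) * sqrt (2*ln(2*real (card I))) \<le> \<delta>" .
      then have "Bn * ((\<delta>/2^K) * sqrt (2*ln(2*real (card I)))) \<le> Bn * \<delta>" using a_B by (intro mult_left_mono) auto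
      then show ?thesis by (simp only: mult.assoc)
    qed
    have Nn2: "2 \<le> real Nn"
    proof -
      have "2 \<le> Nn" using kn_ge unfolding Nn_def .
      then show ?thesis by simp
    qed
    have "(Bn * \<delta>) * sqrt (2*ln(2*(real Nn * real (nk 0))))
         + (\<Sum>k<K. (2 * Bn * (\<delta>/2^k)) * sqrt (2*ln(2*((real Nn * real (nk (Suc k))) * (real Nn * real (nk k))))))
         + (Bn * (\<delta>/2^K)) * sqrt (2*ln(2*real (card I))) \<le> 44 * sqrt (ln (real Nn)) * Bn * Jn"
      by (rule final_arith[OF Nn2 _ \<delta>p nk1 A z]) (use a_B in simp)
    then show ?thesis using chain unfolding M_def by (meson ennreal_leI order_trans)
  qed
  have "(\<integral>\<^sup>+ w. ennreal (Max ((\<lambda>\<theta>. (\<Sum>j\<in>{1..JJ}. \<Sum>kk\<in>{1..kn j}.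
              \<bar>Wn (\<lambda>v. \<rho> j (fst v) \<theta> * qn j kk (snd v j)) w\<bar> powr r) powr (1 / r)) ` T)) \<partial>Q)
      \<le> (\<integral>\<^sup>+ w. ennreal (real Nn powr (1/r)) * ennreal (M w) \<partial>Q)"
  proof (rule nn_integral_mono)
    fix w
    have "ennreal (Max ((\<lambda>\<theta>. (\<Sum>j\<in>{1..JJ}. \<Sum>kk\<in>{1..kn j}.
              \<bar>Wn (\<lambda>v. \<rho> j (fst v) \<theta> * qn j kk (snd v j)) w\<bar> powr r) powr (1 / r)) ` T))
        \<le> ennreal (real Nn powr (1/r) * M w)" by (rule ennreal_leI[OF step1])
    also have "\<dots> = ennreal (real Nn powr (1/r)) * ennreal (M w)" by (rule ennreal_mult') simp
    finally show "ennreal (Max ((\<lambda>\<theta>. (\<Sum>j\<in>{1..JJ}. \<Sum>kk\<in>{1..kn j}.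
              \<bar>Wn (\<lambda>v. \<rho> j (fst v) \<theta> * qn j kk (snd v j)) w\<bar> powr r) powr (1 / r)) ` T))
        \<le> ennreal (real Nn powr (1/r)) * ennreal (M w)" .
  qed
  also have "\<dots> = ennreal (real Nn powr (1/r)) * (\<integral>\<^sup>+ w. ennreal (M w) \<partial>Q)"
    by (rule nn_integral_cmult) (use Mm in simp)
  also have "\<dots> \<le> ennreal (real Nn powr (1/r)) * ennreal (44 * sqrt (ln (real Nn)) * Bn * Jn)"
    by (rule mult_left_mono[OF step2]) simp
  also have "\<dots> = ennreal (44 * real Nn powr (1 / r) * sqrt (ln (real Nn)) * Bn * Jn)"
    by (simp add: ennreal_mult'[symmetric] mult.assoc mult.left_commute)
  finally show ?thesis unfolding Nn_def .
qed

theorem lemmaC4: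
  fixes PP :: "('x \<times> (nat \<Rightarrow> 'z)) measure set"
    and JJ :: nat
    and r :: real
    and \<Theta> :: "nat \<Rightarrow> 't set" and R :: "'t set"
    and \<rho> :: "nat \<Rightarrow> 'x \<Rightarrow> 't \<Rightarrow> real"
    and q :: "nat \<Rightarrow> nat \<Rightarrow> nat \<Rightarrow> 'z \<Rightarrow> real"
    and k :: "nat \<Rightarrow> nat \<Rightarrow> nat"
    and B :: "nat \<Rightarrow> real" and Jn :: "nat \<Rightarrow> real"
    and Fn :: "nat \<Rightarrow> 'x \<times> (nat \<Rightarrow> 'z) \<Rightarrow> real"
    and \<Omega> :: "nat \<Rightarrow> ('x \<times> (nat \<Rightarrow> 'z)) measure \<Rightarrow> 'w measure"
    and W :: "nat \<Rightarrow> ('x \<times> (nat \<Rightarrow> 'z)) measure \<Rightarrow> (('x \<times> (nat \<Rightarrow> 'z)) \<Rightarrow> real) \<Rightarrow> 'w \<Rightarrow> real"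
  assumes PP_prob: "\<forall>P\<in>PP. prob_space P"
    and r_ge: "r \<ge> 2"
    and kn_ge: "\<forall>n. (\<Sum>j\<in>{1..JJ}. k n j) \<ge> 2"
    and rho_meas: "\<forall>n P j \<theta>. P \<in> PP \<and> j \<in> {1..JJ} \<and> \<theta> \<in> \<Theta> n \<inter> R \<longrightarrow>
                     (\<lambda>v. \<rho> j (fst v) \<theta>) \<in> borel_measurable P"
    and q_meas: "\<forall>n P j kk. P \<in> PP \<and> j \<in> {1..JJ} \<and> kk \<in> {1..k n j} \<longrightarrow>
                     (\<lambda>v. q n j kk (snd v j)) \<in> borel_measurable P"
    and a_B: "\<forall>n. B n \<ge> 1"
    and a_q: "\<forall>n P j kk. P \<in> PP \<and> j \<in> {1..JJ} \<and> kk \<in> {1..k n j} \<longrightarrow>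
                 (AE v in P. \<bar>q n j kk (snd v j)\<bar> \<le> B n)"
    and b_env_meas: "\<forall>n P. P \<in> PP \<longrightarrow> Fn n \<in> borel_measurable P"
    and b_env: "\<forall>n j \<theta> v. j \<in> {1..JJ} \<and> \<theta> \<in> \<Theta> n \<inter> R \<longrightarrow> \<bar>\<rho> j (fst v) \<theta>\<bar> \<le> Fn n v"
    and b_env_L2: "\<forall>n. (SUP P\<in>PP. \<integral>\<^sup>+ v. ennreal ((Fn n v)^2) \<partial>P) < \<infinity>"
    and c_J: "\<forall>n. \<forall>P\<in>PP. bracketing_integral P (L2norm P (Fn n))
                 {(\<lambda>v. \<rho> j (fst v) \<theta>) | j \<theta>. j \<in> {1..JJ} \<and> \<theta> \<in> \<Theta> n \<inter> R}
               \<le> ennreal (Jn n)"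
    and W_iso: "\<forall>n. \<forall>P\<in>PP. isonormal P (\<Omega> n P) (W n P)"
  shows "\<exists>K0>0. \<forall>n. \<forall>P\<in>PP. \<forall>T. finite T \<and> T \<noteq> {} \<and> T \<subseteq> \<Theta> n \<inter> R \<longrightarrow>
           (\<integral>\<^sup>+ w. ennreal (Max ((\<lambda>\<theta>.
               (\<Sum>j\<in>{1..JJ}. \<Sum>kk\<in>{1..k n j}.
                  \<bar>W n P (\<lambda>v. \<rho> j (fst v) \<theta> * q n j kk (snd v j)) w\<bar> powr r) powr (1 / r)) ` T))
            \<partial>\<Omega> n P)
           \<le> ennreal (K0 * real (\<Sum>j\<in>{1..JJ}. k n j) powr (1 / r)
                       * sqrt (ln (real (\<Sum>j\<in>{1..JJ}. k n j))) * B n * Jn n)"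
proof -
  have main: "(\<integral>\<^sup>+ w. ennreal (Max ((\<lambda>\<theta>.
               (\<Sum>j\<in>{1..JJ}. \<Sum>kk\<in>{1..k n j}.
                  \<bar>W n P (\<lambda>v. \<rho> j (fst v) \<theta> * q n j kk (snd v j)) w\<bar> powr r) powr (1 / r)) ` T))
            \<partial>\<Omega> n P)
           \<le> ennreal (44 * real (\<Sum>j\<in>{1..JJ}. k n j) powr (1 / r)
                       * sqrt (ln (real (\<Sum>j\<in>{1..JJ}. k n j))) * B n * Jn n)"
    if P: "P \<in> PP" and T: "finite T" "T \<noteq> {}" "T \<subseteq> \<Theta> n \<inter> R" for n P T
  proof (rule main_bound[where Th = "\<Theta> n \<inter> R"])
    show "prob_space P" using PP_prob P by blast
    show "2 \<le> r" by (rule r_ge)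
    show "2 \<le> (\<Sum>j\<in>{1..JJ}. k n j)" using kn_ge by blast
    show "(\<lambda>v. \<rho> j (fst v) \<theta>) \<in> borel_measurable P" if "j \<in> {1..JJ}" "\<theta> \<in> \<Theta> n \<inter> R" for j \<theta>
      using rho_meas P that by blast
    show "(\<lambda>v. q n j kk (snd v j)) \<in> borel_measurable P" if "j \<in> {1..JJ}" "kk \<in> {1..k n j}" for j kk
      using q_meas P that by blast
    show "1 \<le> B n" using a_B by blast
    show "AE v in P. \<bar>q n j kk (snd v j)\<bar> \<le> B n" if "j \<in> {1..JJ}" "kk \<in> {1..k n j}" for j kk
      using a_q P that by blast
    show "Fn n \<in> borel_measurable P" using b_env_meas P by blast
    show "\<bar>\<rho> j (fst v) \<theta>\<bar> \<le> Fn n v" if "j \<in> {1..JJ}" "\<theta> \<in> \<Theta> n \<inter> R" for j \<theta> v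
      using b_env that by blast
    show "(\<integral>\<^sup>+ v. ennreal ((Fn n v)^2) \<partial>P) < \<infinity>"
    proof -
      have "(\<integral>\<^sup>+ v. ennreal ((Fn n v)^2) \<partial>P) \<le> (SUP P\<in>PP. \<integral>\<^sup>+ v. ennreal ((Fn n v)^2) \<partial>P)"
        using P by (rule SUP_upper)
      then show ?thesis using b_env_L2[rule_format, of n] by (rule le_less_trans)
    qed
    show "bracketing_integral P (L2norm P (Fn n))
                 {(\<lambda>v. \<rho> j (fst v) \<theta>) | j \<theta>. j \<in> {1..JJ} \<and> \<theta> \<in> \<Theta> n \<inter> R}
               \<le> ennreal (Jn n)" using c_J P by blast
    show "isonormal P (\<Omega> n P) (W n P)" using W_iso P by blast
  qed (use T in auto)
  show ?thesis
  proof (intro exI[of _ "44::real"] conjI allI ballI impI)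
    show "(0::real) < 44" by simp
  next
    fix n P T assume "P \<in> PP" and "finite T \<and> T \<noteq> {} \<and> T \<subseteq> \<Theta> n \<inter> R"
    then show "(\<integral>\<^sup>+ w. ennreal (Max ((\<lambda>\<theta>.
               (\<Sum>j\<in>{1..JJ}. \<Sum>kk\<in>{1..k n j}.
                  \<bar>W n P (\<lambda>v. \<rho> j (fst v) \<theta> * q n j kk (snd v j)) w\<bar> powr r) powr (1 / r)) ` T))
            \<partial>\<Omega> n P)
           \<le> ennreal (44 * real (\<Sum>j\<in>{1..JJ}. k n j) powr (1 / r)
                       * sqrt (ln (real (\<Sum>j\<in>{1..JJ}. k n j))) * B n * Jn n)"
      using main by blast
  qed
qed

end
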